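(* Let $A$ be a unital $C^*$-algebra and let $a\in A$ be invertible. Then $a$ is unitary if and only if $\rho(a^*,a^{-1})=0$, $r_\sigma(a)=\|a\|$ and $r_\sigma(a^{-1})=\|a^{-1}\|$.
   Context: For $a,b\in A$ and $n\geq 0$ put $C_{a,b}^n\mathbf 1=\sum_{k=0}^n(-1)^k\binom{n}{k}a^{n-k}b^k$ (with $a^0=b^0=\mathbf 1$), and $\rho(a,b)=\limsup_{n\to\infty}\|C_{a,b}^n\mathbf 1\|^{1/n}$. $r_\sigma(x)$ denotes the spectral radius of $x$. *)

theory Defs
  imports "HOL-Analysis.Analysis"
begin

class scaleC =
  fixes scaleC :: "complex \<Rightarrow> 'a \<Rightarrow> 'a" (infixr "*\<^sub>C" 75)

class cstar_star =
  fixes cstar :: "'a \<Rightarrow> 'a"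

class unital_cstar_algebra = scaleC + cstar_star + real_normed_algebra_1 + banach +
  assumes scaleR_scaleC: "scaleR r x = scaleC (complex_of_real r) x"
  and scaleC_add_right: "scaleC c (x + y) = scaleC c x + scaleC c y"
  and scaleC_add_left: "scaleC (c + d) x = scaleC c x + scaleC d x"
  and scaleC_scaleC: "scaleC c (scaleC d x) = scaleC (c * d) x"
  and scaleC_one: "scaleC 1 x = x"
  and norm_scaleC: "norm (scaleC c x) = cmod c * norm x"
  and mult_scaleC_left: "(scaleC c x) * y = scaleC c (x * y)"
  and mult_scaleC_right: "x * (scaleC c y) = scaleC c (x * y)"
  and cstar_cstar: "cstar (cstar x) = x"
  and cstar_add: "cstar (x + y) = cstar x + cstar y"
  and cstar_scaleC: "cstar (scaleC c x) = scaleC (cnj c) (cstar x)"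
  and cstar_mult: "cstar (x * y) = cstar y * cstar x"
  and cstar_identity: "norm (cstar x * x) = norm x ^ 2"

definition alg_invertible :: "'a::unital_cstar_algebra \<Rightarrow> bool" where
  "alg_invertible x \<longleftrightarrow> (\<exists>y. x * y = 1 \<and> y * x = 1)"

definition alg_unitary :: "'a::unital_cstar_algebra \<Rightarrow> bool" where
  "alg_unitary u \<longleftrightarrow> cstar u * u = 1 \<and> u * cstar u = 1"

definition alg_spectrum :: "'a::unital_cstar_algebra \<Rightarrow> complex set" where
  "alg_spectrum x = {z. \<not> alg_invertible (x - scaleC z 1)}"

definition spectral_radius :: "'a::unital_cstar_algebra \<Rightarrow> real" where
  "spectral_radius x = Sup (cmod ` alg_spectrum x)"

definition Cab_one :: "'a::unital_cstar_algebra \<Rightarrow> 'a \<Rightarrow> nat \<Rightarrow> 'a" where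
  "Cab_one a b n = (\<Sum>k\<le>n. ((-1) ^ k * of_nat (n choose k)) * (a ^ (n - k) * b ^ k))"

definition rho :: "'a::unital_cstar_algebra \<Rightarrow> 'a \<Rightarrow> ereal" where
  "rho a b = limsup (\<lambda>n. ereal (root n (norm (Cab_one a b n))))"

end

theory Submission
  imports Defs
begin


definition emb :: "complex \<Rightarrow> 'a::unital_cstar_algebra" where
  "emb z = scaleC z 1"

lemma scaleC_zero_left: "scaleC 0 (x::'a::unital_cstar_algebra) = 0"
proof -
  have "scaleC 0 x = scaleC 0 x + scaleC 0 x" using scaleC_add_left[of 0 0 x] by simp
  then show ?thesis by simp
qed

lemma scaleC_emb: "scaleC z (x::'a::unital_cstar_algebra) = emb z * x"
  by (simp add: emb_def mult_scaleC_left)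

lemma emb_commute: "emb z * (x::'a::unital_cstar_algebra) = x * emb z"
  by (simp add: emb_def mult_scaleC_left mult_scaleC_right)

lemma emb_mult: "emb (z * w) = (emb z * emb w :: 'a::unital_cstar_algebra)"
  by (simp add: emb_def mult_scaleC_left scaleC_scaleC)

lemma emb_add: "emb (z + w) = (emb z + emb w :: 'a::unital_cstar_algebra)"
  by (simp add: emb_def scaleC_add_left)

lemma emb_0[simp]: "emb 0 = (0 :: 'a::unital_cstar_algebra)"
  by (simp add: emb_def scaleC_zero_left)

lemma emb_1[simp]: "emb 1 = (1 :: 'a::unital_cstar_algebra)"
  by (simp add: emb_def scaleC_one)

lemma emb_uminus: "emb (- z) = (- emb z :: 'a::unital_cstar_algebra)"
  using emb_add[of z "-z", where 'a='a] by (simp add: minus_unique)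

lemma emb_diff: "emb (z - w) = (emb z - emb w :: 'a::unital_cstar_algebra)"
  using emb_add[of z "-w", where 'a='a] by (simp add: emb_uminus)

lemma emb_of_real: "emb (of_real r) = (of_real r :: 'a::unital_cstar_algebra)"
  by (simp add: emb_def of_real_def scaleR_scaleC)

lemma emb_scaleR: "emb (r *\<^sub>R z) = (r *\<^sub>R emb z :: 'a::unital_cstar_algebra)"
  by (simp add: scaleR_conv_of_real emb_mult emb_of_real)

lemma norm_emb[simp]: "norm (emb z :: 'a::unital_cstar_algebra) = cmod z"
  by (simp add: emb_def norm_scaleC)

lemma emb_power: "emb (z ^ n) = (emb z ^ n :: 'a::unital_cstar_algebra)"
  by (induction n) (simp_all add: emb_mult)

lemma emb_inj: "emb z = (emb w :: 'a::unital_cstar_algebra) \<Longrightarrow> z = w"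
  by (metis emb_diff norm_emb right_minus_eq norm_eq_zero)

lemma bounded_linear_emb: "bounded_linear (emb :: complex \<Rightarrow> 'a::unital_cstar_algebra)"
  by (rule bounded_linear_intro[where K=1]) (auto simp: emb_add emb_scaleR)

lemma cstar_1[simp]: "cstar (1::'a::unital_cstar_algebra) = 1"
  by (metis cstar_cstar cstar_mult mult.left_neutral mult.right_neutral)

lemma cstar_emb: "cstar (emb z) = (emb (cnj z) :: 'a::unital_cstar_algebra)"
  by (simp add: emb_def cstar_scaleC)

lemma cstar_0[simp]: "cstar (0::'a::unital_cstar_algebra) = 0"
  by (metis add_cancel_right_right cstar_add)

lemma cstar_uminus: "cstar (- x) = - cstar (x::'a::unital_cstar_algebra)"
  by (metis add_eq_0_iff cstar_0 cstar_add)

lemma cstar_diff: "cstar (x - y) = cstar x - cstar (y::'a::unital_cstar_algebra)"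
  by (metis cstar_add cstar_uminus diff_conv_add_uminus)

lemma cstar_power: "cstar (x ^ n) = cstar (x::'a::unital_cstar_algebra) ^ n"
  by (induction n) (simp_all add: cstar_mult power_commutes)

lemma cstar_scaleR: "cstar (r *\<^sub>R x) = r *\<^sub>R cstar (x::'a::unital_cstar_algebra)"
  by (simp add: scaleR_scaleC cstar_scaleC)

lemma norm_cstar_le: "norm (cstar (x::'a::unital_cstar_algebra)) \<le> norm x"
proof (cases "x = 0")
  case True then show ?thesis by simp
next
  case False
  have "norm x ^ 2 \<le> norm (cstar x) * norm x"
    using cstar_identity[of x] norm_mult_ineq[of "cstar x" x] by simp
  then have "norm x * norm x \<le> norm (cstar x) * norm x" by (simp add: power2_eq_square)
  then have "norm x \<le> norm (cstar x)" using False by simp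
  have "norm (cstar x) ^ 2 \<le> norm x * norm (cstar x)"
    using cstar_identity[of "cstar x"] norm_mult_ineq[of x "cstar x"] by (simp add: cstar_cstar)
  then have "norm (cstar x) * norm (cstar x) \<le> norm x * norm (cstar x)" by (simp add: power2_eq_square)
  moreover have "cstar x \<noteq> 0" using False by (metis cstar_0 cstar_cstar)
  ultimately show ?thesis by simp
qed

lemma norm_cstar[simp]: "norm (cstar (x::'a::unital_cstar_algebra)) = norm x"
  by (metis antisym cstar_cstar norm_cstar_le)

lemma norm_selfadj_sq: "cstar h = h \<Longrightarrow> norm (h * h) = norm (h::'a::unital_cstar_algebra) ^ 2"
  using cstar_identity[of h] by simp

lemma norm_selfadj_pow2: "cstar h = h \<Longrightarrow> norm (h ^ (2^j)) = norm (h::'a::unital_cstar_algebra) ^ (2^j)"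
proof (induction j)
  case 0 then show ?case by simp
next
  case (Suc j)
  have sa: "cstar (h ^ (2^j)) = h ^ (2^j)" using Suc.prems by (simp add: cstar_power)
  have "h ^ (2 ^ Suc j) = h ^ (2^j) * h ^ (2^j)" by (simp add: power_add[symmetric] mult_2)
  then have "norm (h ^ (2 ^ Suc j)) = norm (h ^ (2^j)) ^ 2" using norm_selfadj_sq[OF sa] by simp
  also have "\<dots> = norm h ^ (2 ^ Suc j)" using Suc by (simp add: power_mult[symmetric] mult.commute)
  finally show ?case .
qed

definition ainv :: "'a::unital_cstar_algebra \<Rightarrow> 'a" where
  "ainv x = (THE y. x * y = 1 \<and> y * x = 1)"

lemma inv_unique: "x * y = 1 \<Longrightarrow> z * x = 1 \<Longrightarrow> z = (y::'a::unital_cstar_algebra)"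
  by (metis mult.assoc mult.left_neutral mult.right_neutral)

lemma ainv_eq: "x * y = 1 \<Longrightarrow> y * x = 1 \<Longrightarrow> ainv x = (y::'a::unital_cstar_algebra)"
  unfolding ainv_def by (rule the_equality) (auto intro: inv_unique)

lemma ainv: "alg_invertible x \<Longrightarrow> x * ainv x = 1 \<and> ainv x * (x::'a::unital_cstar_algebra) = 1"
  unfolding alg_invertible_def using ainv_eq by metis

lemma ainv_r: "alg_invertible x \<Longrightarrow> x * ainv x = (1::'a::unital_cstar_algebra)" using ainv by blast
lemma ainv_l: "alg_invertible x \<Longrightarrow> ainv x * x = (1::'a::unital_cstar_algebra)" using ainv by blast

lemma invertibleI: "x * y = 1 \<Longrightarrow> z * x = 1 \<Longrightarrow> alg_invertible (x::'a::unital_cstar_algebra)"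
  unfolding alg_invertible_def using inv_unique by metis

lemma invertible_ainv: "alg_invertible x \<Longrightarrow> alg_invertible (ainv (x::'a::unital_cstar_algebra))"
  by (meson ainv invertibleI)

lemma ainv_ainv: "alg_invertible x \<Longrightarrow> ainv (ainv x) = (x::'a::unital_cstar_algebra)"
  by (meson ainv ainv_eq)

lemma invertible_mult: "alg_invertible x \<Longrightarrow> alg_invertible y \<Longrightarrow> alg_invertible (x * (y::'a::unital_cstar_algebra))"
  apply (rule invertibleI[of _ "ainv y * ainv x" "ainv y * ainv x"])
   apply (metis ainv mult.assoc mult.right_neutral)
  by (metis ainv mult.assoc mult.right_neutral)

lemma ainv_mult: "alg_invertible x \<Longrightarrow> alg_invertible y \<Longrightarrow> ainv (x * y) = ainv y * ainv (x::'a::unital_cstar_algebra)"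
  apply (rule ainv_eq)
   apply (metis ainv mult.assoc mult.right_neutral)
  by (metis ainv mult.assoc mult.right_neutral)

lemma invertible_uminus: "alg_invertible (- x) \<longleftrightarrow> alg_invertible (x::'a::unital_cstar_algebra)"
  unfolding alg_invertible_def by (metis minus_minus mult_minus_left mult_minus_right)

lemma invertible_1[simp]: "alg_invertible (1::'a::unital_cstar_algebra)"
  unfolding alg_invertible_def by auto

lemma invertible_emb: "z \<noteq> 0 \<Longrightarrow> alg_invertible (emb z :: 'a::unital_cstar_algebra)"
  unfolding alg_invertible_def by (rule exI[of _ "emb (inverse z)"]) (simp add: emb_mult[symmetric])

lemma ainv_emb: "z \<noteq> 0 \<Longrightarrow> ainv (emb z) = (emb (inverse z) :: 'a::unital_cstar_algebra)"
  by (rule ainv_eq) (simp_all add: emb_mult[symmetric])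

lemma not_invertible_0: "\<not> alg_invertible (0::'a::unital_cstar_algebra)"
  unfolding alg_invertible_def by simp

lemma invertible_nonzero: "alg_invertible x \<Longrightarrow> x \<noteq> (0::'a::unital_cstar_algebra)"
  using not_invertible_0 by blast

lemma ainv_nonzero: "alg_invertible x \<Longrightarrow> ainv x \<noteq> (0::'a::unital_cstar_algebra)"
  using invertible_ainv invertible_nonzero by blast

lemma norm_ainv_pos: "alg_invertible x \<Longrightarrow> norm (ainv x) > (0::real)"
  using ainv_nonzero by auto

lemma invertible_factor_left:
  assumes "x * y = y * x" "alg_invertible (x * (y::'a::unital_cstar_algebra))"
  shows "alg_invertible x"
proof -
  let ?w = "ainv (x*y)"
  have "x * (y * ?w) = 1" using ainv[OF assms(2)] by (simp add: mult.assoc)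
  moreover have "(?w * y) * x = 1" using ainv[OF assms(2)] assms(1) by (simp add: mult.assoc)
  ultimately show ?thesis by (rule invertibleI)
qed

lemma invertible_factor_right:
  assumes "x * y = y * x" "alg_invertible (x * (y::'a::unital_cstar_algebra))"
  shows "alg_invertible y"
  using invertible_factor_left[of y x] assms by simp

lemma neumann:
  fixes y :: "'a::unital_cstar_algebra"
  assumes "norm y < 1"
  shows "alg_invertible (1 - y) \<and> norm (ainv (1 - y)) \<le> 1 / (1 - norm y)"
proof -
  have gs: "summable (\<lambda>n. norm y ^ n)" using assms by (simp add: summable_geometric)
  have ns: "summable (\<lambda>n. norm (y ^ n))"
    by (rule summable_comparison_test'[OF gs, of 0]) (simp add: norm_power_ineq)
  then have sm: "summable (\<lambda>n. y ^ n)" by (rule summable_norm_cancel)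
  define s where "s = suminf (\<lambda>n. y ^ n)"
  have ps: "(\<lambda>N. \<Sum>n<N. y ^ n) \<longlonglongrightarrow> s" unfolding s_def using sm by (rule summable_LIMSEQ)
  have y0: "(\<lambda>N. y ^ N) \<longlonglongrightarrow> 0"
  proof -
    have "(\<lambda>N. norm y ^ N) \<longlonglongrightarrow> 0" using assms by (simp add: LIMSEQ_power_zero)
    then show ?thesis
      by (rule Lim_null_comparison[rotated]) (simp add: norm_power_ineq)
  qed
  have tel1: "(1 - y) * (\<Sum>n<N. y ^ n) = 1 - y ^ N" for N
  proof (induction N)
    case (Suc N)
    have "(1 - y) * (\<Sum>n<Suc N. y ^ n) = (1 - y) * (\<Sum>n<N. y ^ n) + (1 - y) * y ^ N"
      by (simp add: distrib_left)
    also have "\<dots> = 1 - y ^ Suc N" using Suc by (simp add: algebra_simps)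
    finally show ?case .
  qed simp
  have tel2: "(\<Sum>n<N. y ^ n) * (1 - y) = 1 - y ^ N" for N
  proof (induction N)
    case (Suc N)
    have "(\<Sum>n<Suc N. y ^ n) * (1 - y) = (\<Sum>n<N. y ^ n) * (1 - y) + y ^ N * (1 - y)"
      by (simp add: distrib_right)
    also have "\<dots> = 1 - y ^ Suc N" using Suc by (simp add: algebra_simps power_commutes)
    finally show ?case .
  qed simp
  have "(\<lambda>N. (1 - y) * (\<Sum>n<N. y ^ n)) \<longlonglongrightarrow> (1 - y) * s"
    by (intro tendsto_mult_left ps)
  moreover have "(\<lambda>N. (1 - y) * (\<Sum>n<N. y ^ n)) \<longlonglongrightarrow> 1"
    unfolding tel1 using tendsto_diff[OF tendsto_const[of 1] y0] by simp
  ultimately have r: "(1 - y) * s = 1" using LIMSEQ_unique by blast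
  have "(\<lambda>N. (\<Sum>n<N. y ^ n) * (1 - y)) \<longlonglongrightarrow> s * (1 - y)"
    by (intro tendsto_mult_right ps)
  moreover have "(\<lambda>N. (\<Sum>n<N. y ^ n) * (1 - y)) \<longlonglongrightarrow> 1"
    unfolding tel2 using tendsto_diff[OF tendsto_const[of 1] y0] by simp
  ultimately have l: "s * (1 - y) = 1" using LIMSEQ_unique by blast
  have inv: "alg_invertible (1 - y)" using r l by (rule invertibleI)
  have ai: "ainv (1 - y) = s" using r l by (rule ainv_eq)
  have "norm s \<le> (\<Sum>n. norm (y ^ n))" unfolding s_def using ns by (rule summable_norm)
  also have "\<dots> \<le> (\<Sum>n. norm y ^ n)"
    by (rule suminf_le[OF _ ns gs]) (simp add: norm_power_ineq)
  also have "\<dots> = 1 / (1 - norm y)" using assms by (simp add: suminf_geometric)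
  finally show ?thesis using inv ai by simp
qed

lemma perturb:
  fixes x h :: "'a::unital_cstar_algebra"
  assumes "alg_invertible x" "norm (ainv x) * norm h < 1"
  shows "alg_invertible (x + h) \<and> norm (ainv (x + h)) \<le> norm (ainv x) / (1 - norm (ainv x) * norm h)"
proof -
  let ?y = "- (ainv x * h)"
  have ny: "norm ?y < 1" using assms(2) norm_mult_ineq[of "ainv x" h] by simp
  from neumann[OF ny] have n1: "alg_invertible (1 - ?y)" and n2: "norm (ainv (1 - ?y)) \<le> 1 / (1 - norm ?y)" by auto
  have eq: "x + h = x * (1 - ?y)" using ainv[OF assms(1)] by (simp add: algebra_simps mult.assoc[symmetric])
  have inv: "alg_invertible (x + h)" unfolding eq by (rule invertible_mult[OF assms(1) n1])
  have "ainv (x + h) = ainv (1 - ?y) * ainv x" unfolding eq by (rule ainv_mult[OF assms(1) n1])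
  then have "norm (ainv (x + h)) \<le> norm (ainv (1 - ?y)) * norm (ainv x)" by (simp add: norm_mult_ineq)
  also have "\<dots> \<le> 1 / (1 - norm ?y) * norm (ainv x)" by (rule mult_right_mono[OF n2]) simp
  also have "\<dots> \<le> 1 / (1 - norm (ainv x) * norm h) * norm (ainv x)"
  proof (rule mult_right_mono[OF _ norm_ge_zero])
    have "norm ?y \<le> norm (ainv x) * norm h" by (simp add: norm_mult_ineq)
    then show "1 / (1 - norm ?y) \<le> 1 / (1 - norm (ainv x) * norm h)"
      using assms(2) by (intro divide_left_mono) auto
  qed
  finally show ?thesis using inv by simp
qed

lemma ainv_diff: "alg_invertible x \<Longrightarrow> alg_invertible y \<Longrightarrow>
   ainv y - ainv x = ainv y * (x - y) * ainv (x::'a::unital_cstar_algebra)"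
  by (simp add: algebra_simps mult.assoc ainv_r) (simp add: mult.assoc[symmetric] ainv_l)

lemma open_invertible: "open {x::'a::unital_cstar_algebra. alg_invertible x}"
  unfolding open_dist
proof safe
  fix x :: 'a assume x: "alg_invertible x"
  show "\<exists>e>0. \<forall>y. dist y x < e \<longrightarrow> y \<in> {x. alg_invertible x}"
  proof (intro exI[of _ "1 / norm (ainv x)"] conjI allI impI)
    show "0 < 1 / norm (ainv x)" using norm_ainv_pos[OF x] by simp
    fix y assume "dist y x < 1 / norm (ainv x)"
    then have "norm (ainv x) * norm (y - x) < 1" using norm_ainv_pos[OF x] by (simp add: dist_norm field_simps)
    from perturb[OF x this] show "y \<in> {x. alg_invertible x}" by simp
  qed
qed

lemma ainv_has_derivative:
  fixes x :: "'a::unital_cstar_algebra"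
  assumes x: "alg_invertible x"
  shows "(ainv has_derivative (\<lambda>h. - (ainv x * h * ainv x))) (at x)"
proof -
  let ?N = "norm (ainv x)"
  have Npos: "?N > 0" using norm_ainv_pos[OF x] .
  have bl0: "bounded_linear (\<lambda>h. ainv x * h * ainv x)"
    using bounded_linear_compose[OF bounded_linear_mult_left[of "ainv x"] bounded_linear_mult_right[of "ainv x"]]
    by (simp add: o_def)
  have bl: "bounded_linear (\<lambda>h. - (ainv x * h * ainv x))"
    using bounded_linear_minus[OF bl0] .
  have ev: "\<forall>\<^sub>F y in at x. norm (ainv y - ainv x - - (ainv x * (y - x) * ainv x)) / norm (y - x)
             \<le> 2 * ?N ^ 3 * norm (y - x)"
  proof -
    have "\<forall>\<^sub>F y in at x. dist y x < 1 / (2 * ?N)"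
      unfolding eventually_at using Npos by (intro exI[of _ "1/(2*?N)"]) auto
    then show ?thesis
    proof (rule eventually_mono)
      fix y assume "dist y x < 1 / (2 * ?N)"
      then have small: "?N * norm (y - x) \<le> 1/2" using Npos by (simp add: dist_norm field_simps)
      have p: "?N * norm (y - x) < 1" using small by simp
      from perturb[OF x p] have yi: "alg_invertible y" and
        yb: "norm (ainv y) \<le> ?N / (1 - ?N * norm (y - x))" by auto
      have yb2: "norm (ainv y) \<le> 2 * ?N"
      proof -
        have "?N / (1 - ?N * norm (y - x)) \<le> 2 * ?N" using small Npos by (simp add: field_simps)
        then show ?thesis using yb by simp
      qed
      have d: "ainv y - ainv x = - (ainv y * (y - x) * ainv x)"
        using ainv_diff[OF x yi] by (simp add: algebra_simps)
      have "ainv y - ainv x - - (ainv x * (y - x) * ainv x) = (ainv x - ainv y) * (y - x) * ainv x"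
        using d by (simp add: algebra_simps)
      also have "\<dots> = ainv y * (y - x) * ainv x * (y - x) * ainv x"
      proof -
        have d': "ainv x - ainv y = ainv y * (y - x) * ainv x" using arg_cong[OF d, of uminus] by simp
        show ?thesis by (simp only: d')
      qed
      finally have eq: "ainv y - ainv x - - (ainv x * (y - x) * ainv x) = ainv y * (y - x) * ainv x * (y - x) * ainv x" .
      have "norm (ainv y * (y - x) * ainv x * (y - x) * ainv x) \<le> norm (ainv y) * norm (y - x) * ?N * norm (y - x) * ?N"
        by (intro order_trans[OF norm_mult_ineq] mult_mono mult_nonneg_nonneg) (auto intro: order_trans[OF norm_mult_ineq] mult_mono)
      also have "\<dots> \<le> (2 * ?N) * norm (y - x) * ?N * norm (y - x) * ?N"
        by (intro mult_right_mono yb2) auto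
      finally have "norm (ainv y - ainv x - - (ainv x * (y - x) * ainv x)) \<le> 2 * ?N ^ 3 * norm (y - x) * norm (y - x)"
        unfolding eq by (simp add: power3_eq_cube algebra_simps)
      then show "norm (ainv y - ainv x - - (ainv x * (y - x) * ainv x)) / norm (y - x) \<le> 2 * ?N ^ 3 * norm (y - x)"
        by (cases "y = x") (simp_all add: divide_le_eq)
    qed
  qed
  have lim: "((\<lambda>y. 2 * ?N ^ 3 * norm (y - x)) \<longlongrightarrow> 0) (at x)"
  proof -
    have "((\<lambda>y. norm (y - x)) \<longlongrightarrow> norm (x - x)) (at x)"
      by (intro tendsto_intros)
    then show ?thesis using tendsto_mult_left[of _ 0 _ "2 * ?N ^ 3"] by fastforce
  qed
  show ?thesis
    unfolding has_derivative_iff_norm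
  proof (intro conjI bl)
    show "((\<lambda>y. norm (ainv y - ainv x - - (ainv x * (y - x) * ainv x)) / norm (y - x)) \<longlongrightarrow> 0) (at x)"
      by (rule Lim_null_comparison[OF _ lim]) (use ev in simp)
  qed
qed

lemma ainv_continuous_on: "continuous_on {x::'a::unital_cstar_algebra. alg_invertible x} ainv"
  using ainv_has_derivative has_derivative_continuous
  by (metis continuous_at_imp_continuous_on mem_Collect_eq)

lemma spec_iff: "z \<in> alg_spectrum x \<longleftrightarrow> \<not> alg_invertible (x - emb z :: 'a::unital_cstar_algebra)"
  by (simp add: alg_spectrum_def emb_def)

lemma resolvent_large:
  fixes x :: "'a::unital_cstar_algebra"
  assumes "cmod z > norm x"
  shows "alg_invertible (emb z - x) \<and> norm (ainv (emb z - x)) \<le> 1 / (cmod z - norm x)"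
proof -
  have z0: "z \<noteq> 0" using assms by (metis norm_ge_zero norm_zero not_less)
  let ?y = "emb (inverse z) * x"
  have ny: "norm ?y \<le> norm x / cmod z"
    using norm_mult_ineq[of "emb (inverse z)" x] by (simp add: norm_inverse divide_inverse mult.commute)
  have zp: "cmod z > 0" using z0 by simp
  have "norm x / cmod z < 1" using assms zp by simp
  then have ny1: "norm ?y < 1" using ny by linarith
  from neumann[OF ny1] have n1: "alg_invertible (1 - ?y)" and n2: "norm (ainv (1 - ?y)) \<le> 1 / (1 - norm ?y)" by auto
  have ez: "emb z * (emb (inverse z) * x) = x"
    by (simp add: mult.assoc[symmetric] emb_mult[symmetric] z0)
  have eq: "emb z - x = emb z * (1 - ?y)"
    by (simp add: right_diff_distrib ez)
  have inv: "alg_invertible (emb z - x)" unfolding eq by (rule invertible_mult[OF invertible_emb[OF z0] n1])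
  have "ainv (emb z - x) = ainv (1 - ?y) * emb (inverse z)"
    unfolding eq by (simp add: ainv_mult[OF invertible_emb[OF z0] n1] ainv_emb[OF z0])
  then have "norm (ainv (emb z - x)) \<le> norm (ainv (1 - ?y)) * (1 / cmod z)"
    using norm_mult_ineq[of "ainv (1 - ?y)" "emb (inverse z)"] by (simp add: norm_inverse divide_inverse)
  also have "\<dots> \<le> 1 / (1 - norm ?y) * (1 / cmod z)" by (rule mult_right_mono[OF n2]) simp
  also have "\<dots> \<le> 1 / (1 - norm x / cmod z) * (1 / cmod z)"
  proof (rule mult_right_mono)
    have "1 - norm x / cmod z > 0" using assms zp by (simp add: field_simps)
    then show "1 / (1 - norm ?y) \<le> 1 / (1 - norm x / cmod z)" using ny ny1 by (intro divide_left_mono) auto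
  qed simp
  also have "\<dots> = 1 / (cmod z - norm x)" using zp by (simp add: field_simps)
  finally show ?thesis using inv by simp
qed

lemma spec_bound: "z \<in> alg_spectrum x \<Longrightarrow> cmod z \<le> norm (x::'a::unital_cstar_algebra)"
  unfolding spec_iff using resolvent_large[of x z] invertible_uminus[of "emb z - x"]
  by (metis minus_diff_eq not_le)

lemma invertible_minus_swap: "alg_invertible (x - y) \<longleftrightarrow> alg_invertible (y - (x::'a::unital_cstar_algebra))"
  by (metis invertible_uminus minus_diff_eq)

lemma pow_factor:
  fixes x u :: "'a::unital_cstar_algebra"
  assumes "\<And>w. u * w = w * u"
  shows "\<exists>q. x ^ n - u ^ n = (x - u) * q \<and> x * q = q * x"
proof (induction n)
  case 0 then show ?case by (intro exI[of _ 0]) simp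
next
  case (Suc n)
  then obtain q where q1: "x ^ n - u ^ n = (x - u) * q" and q2: "q * x = x * q" by metis
  have c1: "x * (x - u) = (x - u) * x" using assms[of x] by (simp add: algebra_simps)
  have un: "u ^ n * w = w * u ^ n" for w
    by (induction n) (simp_all add: assms mult.assoc, metis assms mult.assoc)
  let ?q = "x * q + u ^ n"
  have "x ^ Suc n - u ^ Suc n = x * (x ^ n - u ^ n) + (x - u) * u ^ n"
    by (simp add: algebra_simps)
  also have "\<dots> = (x - u) * ?q" unfolding q1
    by (simp add: distrib_left mult.assoc[symmetric] c1)
  finally have e1: "x ^ Suc n - u ^ Suc n = (x - u) * ?q" .
  have "x * ?q = ?q * x"
    by (simp add: distrib_left distrib_right mult.assoc q2 un)
  then show ?case using e1 by blast
qed

lemma spec_power: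
  fixes x :: "'a::unital_cstar_algebra"
  assumes "z \<in> alg_spectrum x"
  shows "z ^ n \<in> alg_spectrum (x ^ n)"
proof -
  obtain q where q1: "x ^ n - emb z ^ n = (x - emb z) * q" and q2: "x * q = q * x"
    using pow_factor[of "emb z" x n] emb_commute by blast
  have q3: "(x - emb z) * q = q * (x - emb z)"
    by (simp add: algebra_simps q2 emb_commute[of z q])
  show ?thesis
  proof (rule ccontr)
    assume "z ^ n \<notin> alg_spectrum (x ^ n)"
    then have "alg_invertible ((x - emb z) * q)" unfolding spec_iff emb_power q1 by simp
    then have "alg_invertible (x - emb z)" using invertible_factor_left q3 by blast
    then show False using assms spec_iff by blast
  qed
qed

lemma spec_bdd: "bdd_above (cmod ` alg_spectrum (x::'a::unital_cstar_algebra))"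
  using spec_bound by (intro bdd_aboveI[of _ "norm x"]) auto

lemma sr_upper: "z \<in> alg_spectrum x \<Longrightarrow> cmod z \<le> spectral_radius (x::'a::unital_cstar_algebra)"
  unfolding spectral_radius_def using spec_bdd by (intro cSup_upper) auto

lemma sr_nonneg: "alg_spectrum x \<noteq> {} \<Longrightarrow> 0 \<le> spectral_radius (x::'a::unital_cstar_algebra)"
  using sr_upper by (meson all_not_in_conv norm_ge_zero order_trans)

lemma sr_pow:
  fixes x :: "'a::unital_cstar_algebra"
  assumes ne: "alg_spectrum x \<noteq> {}" and n: "n \<ge> 1"
  shows "spectral_radius x ^ n \<le> norm (x ^ n)"
proof (rule ccontr)
  let ?r = "spectral_radius x"
  assume "\<not> ?r ^ n \<le> norm (x ^ n)"
  then have lt: "norm (x ^ n) < ?r ^ n" by simp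
  define s where "s = root n (norm (x ^ n))"
  have s0: "s \<ge> 0" unfolding s_def by (rule real_root_ge_zero) simp
  have sn: "s ^ n = norm (x ^ n)" unfolding s_def using n by (simp add: real_root_pow_pos2)
  have r0: "?r \<ge> 0" using sr_nonneg[OF ne] .
  have "s < ?r"
  proof (rule ccontr)
    assume "\<not> s < ?r" then have "?r \<le> s" by simp
    then have "?r ^ n \<le> s ^ n" using r0 by (simp add: power_mono)
    then show False using lt sn by simp
  qed
  then have "s < Sup (cmod ` alg_spectrum x)" unfolding spectral_radius_def .
  then have "\<exists>w\<in>cmod ` alg_spectrum x. s < w"
    using less_cSup_iff[of "cmod ` alg_spectrum x" s] ne spec_bdd[of x] by auto
  then obtain z where z: "z \<in> alg_spectrum x" "s < cmod z" by auto
  have "cmod z ^ n \<le> norm (x ^ n)"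
    using spec_bound[OF spec_power[OF z(1), of n]] by (simp add: norm_power)
  moreover have "s ^ n < cmod z ^ n" using z(2) s0 n by (simp add: power_strict_mono)
  ultimately show False using sn by simp
qed

lemma spec_selfadj_real:
  fixes h :: "'a::unital_cstar_algebra"
  assumes sa: "cstar h = h" and z: "z \<in> alg_spectrum h"
  shows "Im z = 0"
proof (rule ccontr)
  assume nz: "Im z \<noteq> 0"
  have key: "cmod z ^ 2 + 2 * r * Im z \<le> norm h ^ 2" for r :: real
  proof -
    let ?k = "h + emb (\<i> * of_real r)"
    have "z + \<i> * of_real r \<in> alg_spectrum ?k"
      using z unfolding spec_iff by (simp add: emb_add algebra_simps)
    then have b: "cmod (z + \<i> * of_real r) \<le> norm ?k" by (rule spec_bound)
    have "cstar ?k = h - emb (\<i> * of_real r)"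
      using sa by (simp add: cstar_add cstar_emb emb_uminus)
    then have "norm ?k ^ 2 = norm ((h - emb (\<i> * of_real r)) * ?k)"
      using cstar_identity[of ?k] by simp
    also have "(h - emb (\<i> * of_real r)) * ?k = h * h + emb (of_real (r^2))"
    proof -
      have hc: "h * emb a = emb a * h" for a by (rule emb_commute[symmetric])
      have ee: "emb (\<i> * of_real r) * emb (\<i> * of_real r) = - (emb (of_real (r^2)) :: 'a)"
      proof -
        have "\<i> * complex_of_real r * (\<i> * complex_of_real r) = (\<i> * \<i>) * (complex_of_real r * complex_of_real r)"
          by (simp only: ac_simps)
        then have "\<i> * complex_of_real r * (\<i> * complex_of_real r) = - complex_of_real (r^2)"
          by (simp add: power2_eq_square)
        then show ?thesis by (simp only: emb_mult[symmetric] emb_uminus[symmetric])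
      qed
      show ?thesis by (simp add: algebra_simps hc ee)
    qed
    also have "norm \<dots> \<le> norm h ^ 2 + r ^ 2"
    proof (rule order_trans[OF norm_triangle_ineq])
      have "cmod (complex_of_real (r^2)) = r ^ 2" by (simp only: norm_of_real) simp
      then show "norm (h * h) + norm (emb (complex_of_real (r\<^sup>2)) :: 'a) \<le> (norm h)\<^sup>2 + r\<^sup>2"
        using norm_mult_ineq[of h h] by (simp only: norm_emb power2_eq_square)
    qed
    finally have k2: "norm ?k ^ 2 \<le> norm h ^ 2 + r ^ 2" .
    have "cmod (z + \<i> * of_real r) ^ 2 \<le> norm ?k ^ 2" using b by (simp add: power_mono)
    moreover have "cmod (z + \<i> * of_real r) ^ 2 = cmod z ^ 2 + 2 * r * Im z + r ^ 2"
      unfolding cmod_power2 by (simp add: power2_eq_square algebra_simps)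
    ultimately show ?thesis using k2 by simp
  qed
  define r where "r = (norm h ^ 2 + 1) / (2 * Im z)"
  have "2 * r * Im z = norm h ^ 2 + 1" unfolding r_def using nz by simp
  moreover have "cmod z ^ 2 \<ge> 0" by simp
  ultimately show False using key[of r] by linarith
qed

lemma spec_swap:
  fixes y w :: "'a::unital_cstar_algebra"
  assumes "z \<in> alg_spectrum (y * w)" "z \<noteq> 0"
  shows "z \<in> alg_spectrum (w * y)"
proof (rule ccontr)
  assume "z \<notin> alg_spectrum (w * y)"
  then have inv: "alg_invertible (w * y - emb z)" unfolding spec_iff by simp
  let ?v = "ainv (w * y - emb z)"
  let ?X = "y * ?v * w - 1"
  let ?t = "emb (inverse z) * ?X"
  have l1: "(w * y - emb z) * ?v = 1" and l2: "?v * (w * y - emb z) = 1" using ainv[OF inv] by auto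
  have cz: "emb z * (y * r) = y * (emb z * r)" for r by (metis emb_commute mult.assoc)
  have cw: "w * emb z = emb z * w" by (rule emb_commute[symmetric])
  have a: "(y * w - emb z) * ?X = emb z"
  proof -
    have "(y * w - emb z) * ?X = y * ((w * y - emb z) * ?v) * w - y * w + emb z"
      by (simp add: algebra_simps cz)
    then show ?thesis using l1 by simp
  qed
  have b: "?X * (y * w - emb z) = emb z"
  proof -
    have "?X * (y * w - emb z) = y * (?v * (w * y - emb z)) * w - y * w + emb z"
      by (simp add: algebra_simps cw)
    then show ?thesis using l2 by simp
  qed
  have "(y * w - emb z) * ?t = emb (inverse z) * ((y * w - emb z) * ?X)"
    by (metis emb_commute mult.assoc)
  also have "\<dots> = 1" using a assms(2) by (simp add: emb_mult[symmetric])
  finally have r1: "(y * w - emb z) * ?t = 1" .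
  have r2: "?t * (y * w - emb z) = 1"
    using b assms(2) by (simp add: mult.assoc emb_mult[symmetric])
  from r1 r2 have "alg_invertible (y * w - emb z)" by (rule invertibleI)
  then show False using assms(1) spec_iff by blast
qed

lemma spec_quadratic:
  fixes f :: "'a::unital_cstar_algebra"
  assumes ff: "f * f = emb c * f" and z: "z \<in> alg_spectrum f"
  shows "z = 0 \<or> z = c"
proof (rule ccontr)
  assume "\<not> (z = 0 \<or> z = c)"
  then have k0: "z * (c - z) \<noteq> 0" by auto
  let ?M = "f - emb z" and ?N = "f + emb z - emb c"
  have fc: "f * emb a = emb a * f" for a by (rule emb_commute[symmetric])
  have czc: "emb c * emb z = (emb z * emb c :: 'a)" by (simp add: emb_mult[symmetric] mult.commute)
  have zz: "emb (z * (c - z)) = emb z * emb c - emb z * (emb z :: 'a)"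
    by (simp only: emb_mult[symmetric] emb_diff[symmetric] right_diff_distrib)
  have MN: "?M * ?N = emb (z * (c - z))"
  proof -
    have "?M * ?N = f * f + f * emb z - f * emb c - emb z * f - emb z * emb z + emb z * emb c"
      by (simp add: algebra_simps)
    also have "\<dots> = emb c * f + emb z * f - emb c * f - emb z * f - emb z * emb z + emb z * emb c"
      by (simp only: ff fc)
    also have "\<dots> = emb (z * (c - z))" unfolding zz by simp
    finally show ?thesis .
  qed
  have NM: "?N * ?M = emb (z * (c - z))"
  proof -
    have "?N * ?M = f * f - f * emb z + emb z * f - emb z * emb z - emb c * f + emb c * emb z"
      by (simp add: algebra_simps)
    also have "\<dots> = emb c * f - emb z * f + emb z * f - emb z * emb z - emb c * f + emb z * emb c"
      by (simp only: ff fc czc)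
    also have "\<dots> = emb (z * (c - z))" unfolding zz by simp
    finally show ?thesis .
  qed
  let ?k = "inverse (z * (c - z))"
  have kk: "emb (z * (c - z)) * emb ?k = (1::'a)"
    by (simp only: emb_mult[symmetric] right_inverse[OF k0] emb_1)
  have kk2: "emb ?k * emb (z * (c - z)) = (1::'a)"
    by (simp only: emb_mult[symmetric] left_inverse[OF k0] emb_1)
  have "?M * (?N * emb ?k) = 1"
    by (simp only: mult.assoc[symmetric] MN kk)
  moreover have "(?N * emb ?k) * ?M = 1"
  proof -
    have "(?N * emb ?k) * ?M = emb ?k * (?N * ?M)" by (metis emb_commute mult.assoc)
    then show ?thesis by (simp only: NM kk2)
  qed
  ultimately have "alg_invertible ?M" by (rule invertibleI)
  then show False using z spec_iff by blast
qed

lemma spec_square: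
  fixes x :: "'a::unital_cstar_algebra"
  assumes "z \<in> alg_spectrum (x * x)"
  shows "\<exists>v\<in>alg_spectrum x. z = v * v"
proof (rule ccontr)
  assume H: "\<not> (\<exists>v\<in>alg_spectrum x. z = v * v)"
  let ?v = "csqrt z"
  have vv: "?v * ?v = z" using power2_csqrt[of z] by (simp add: power2_eq_square)
  have i1: "alg_invertible (x - emb ?v)"
  proof (rule ccontr)
    assume "\<not> alg_invertible (x - emb ?v)"
    then have "?v \<in> alg_spectrum x" using spec_iff by blast
    then show False using H vv by auto
  qed
  have i2: "alg_invertible (x - emb (- ?v))"
  proof (rule ccontr)
    assume "\<not> alg_invertible (x - emb (- ?v))"
    then have "- ?v \<in> alg_spectrum x" using spec_iff by blast
    then show False using H vv by auto
  qed
  have xc: "x * emb a = emb a * x" for a by (rule emb_commute[symmetric])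
  have ee: "emb ?v * emb ?v = (emb z :: 'a)" by (simp add: emb_mult[symmetric] vv)
  have "x * x - emb z = (x - emb ?v) * (x - emb (- ?v))"
    by (simp add: algebra_simps emb_uminus xc ee)
  then have "alg_invertible (x * x - emb z)" using invertible_mult[OF i1 i2] by simp
  then show False using assms spec_iff by blast
qed

lemma continuous_on_emb[continuous_intros]:
  "continuous_on S f \<Longrightarrow> continuous_on S (\<lambda>t. emb (f t) :: 'a::unital_cstar_algebra)"
  by (rule bounded_linear.continuous_on[OF bounded_linear_emb])

lemma E_emb: "R *\<^sub>R emb (cis t) = (emb (complex_of_real R * cis t) :: 'a::unital_cstar_algebra)"
  by (metis emb_scaleR scaleR_conv_of_real)

lemma cis_vd: "(cis has_vector_derivative (\<i> * cis t)) (at t within S)"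
  using has_derivative_cis[OF has_derivative_ident, of t S] by (simp add: has_vector_derivative_def)

lemma E_vd: "((\<lambda>t. emb (cis t) :: 'a::unital_cstar_algebra) has_vector_derivative emb (\<i> * cis t)) (at t within S)"
  by (rule bounded_linear.has_vector_derivative[OF bounded_linear_emb cis_vd])

lemma ainv_vd:
  fixes \<phi> :: "real \<Rightarrow> 'a::unital_cstar_algebra"
  assumes "(\<phi> has_vector_derivative \<phi>') (at t within S)" "alg_invertible (\<phi> t)"
  shows "((\<lambda>s. ainv (\<phi> s)) has_vector_derivative - (ainv (\<phi> t) * \<phi>' * ainv (\<phi> t))) (at t within S)"
  using vector_derivative_diff_chain_within[OF assms(1) has_derivative_at_withinI[OF ainv_has_derivative[OF assms(2)]]]
  by (simp add: o_def)

lemma J_zero: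
  fixes x :: "'a::unital_cstar_algebra" and R1 :: real
  assumes R1: "0 \<le> R1" and inv: "\<And>z. R1 \<le> cmod z \<Longrightarrow> alg_invertible (emb z - x)"
    and R: "R1 \<le> R"
  shows "integral (cbox 0 (2*pi)) (\<lambda>t. ainv (R *\<^sub>R emb (cis t) - x)) = 0"
proof -
  define U where "U = {R1..}"
  define G where "G R t = ainv (R *\<^sub>R emb (cis t) - x)" for R t
  define fR where "fR R t = - (G R t * emb (cis t) * G R t)" for R t
  define J where "J R = integral (cbox 0 (2*pi)) (G R)" for R
  have Pinv: "alg_invertible (R *\<^sub>R emb (cis t) - x)" if "R \<in> U" for R t
  proof -
    have "R1 \<le> cmod (complex_of_real R * cis t)" using that R1 by (simp add: U_def norm_mult)
    from inv[OF this] show ?thesis by (simp add: E_emb)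
  qed
  have contP: "continuous_on UNIV (\<lambda>p::real\<times>real. fst p *\<^sub>R emb (cis (snd p)) - x)"
    by (intro continuous_intros)
  have contG0: "continuous_on (U \<times> UNIV) (\<lambda>p. G (fst p) (snd p))"
    unfolding G_def
    by (rule continuous_on_compose2[OF ainv_continuous_on continuous_on_subset[OF contP]]) (auto intro: Pinv)
  have contG: "continuous_on (U \<times> cbox 0 (2*pi)) (\<lambda>p. G (fst p) (snd p))"
    by (rule continuous_on_subset[OF contG0]) auto
  have contfR: "continuous_on (U \<times> cbox 0 (2*pi)) (\<lambda>(R, t). fR R t)"
  proof -
    have "continuous_on (U \<times> cbox 0 (2*pi)) (\<lambda>p. - (G (fst p) (snd p) * emb (cis (snd p)) * G (fst p) (snd p)))"
      by (intro continuous_intros contG)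
    then show ?thesis by (simp add: fR_def split_beta)
  qed
  have contGR: "continuous_on (cbox 0 (2*pi)) (G R)" if "R \<in> U" for R
  proof -
    have "continuous_on (cbox 0 (2*pi)) (\<lambda>t. G (fst (R, t)) (snd (R, t)))"
      by (rule continuous_on_compose2[OF contG]) (auto intro!: continuous_intros simp: that)
    then show ?thesis by simp
  qed
  have intG: "G R integrable_on cbox 0 (2*pi)" if "R \<in> U" for R
    using contGR[OF that] by (rule integrable_continuous)
  have dR: "((\<lambda>R. G R t) has_vector_derivative fR R t) (at R within U)" if "R \<in> U" for R t
  proof -
    have "((\<lambda>R. R *\<^sub>R emb (cis t) - x) has_vector_derivative emb (cis t)) (at R within U)"
      by (auto intro!: derivative_eq_intros)
    from ainv_vd[OF this Pinv[OF that]] show ?thesis by (simp add: G_def fR_def)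
  qed
  have Jd: "(J has_vector_derivative integral (cbox 0 (2*pi)) (fR R)) (at R within U)" if "R \<in> U" for R
    unfolding J_def
    by (rule leibniz_rule_vector_derivative[OF dR intG contfR that]) (auto simp: U_def)
  have fR0: "integral (cbox 0 (2*pi)) (fR R) = 0" if "R \<in> U" "R \<noteq> 0" for R
  proof -
    define H where "H t = emb (- \<i>) * (inverse R *\<^sub>R G R t)" for t
    have Hd: "(H has_vector_derivative fR R t) (at t within {0..2*pi})" for t
    proof -
      have "((\<lambda>t. R *\<^sub>R emb (cis t) - x) has_vector_derivative R *\<^sub>R emb (\<i> * cis t)) (at t within {0..2*pi})"
        by (auto intro!: derivative_eq_intros E_vd)
      from ainv_vd[OF this Pinv[OF that(1)]]
      have "(G R has_vector_derivative - (G R t * (R *\<^sub>R emb (\<i> * cis t)) * G R t)) (at t within {0..2*pi})"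
        by (simp add: G_def[abs_def])
      then have "(H has_vector_derivative emb (- \<i>) * (inverse R *\<^sub>R - (G R t * (R *\<^sub>R emb (\<i> * cis t)) * G R t))) (at t within {0..2*pi})"
        unfolding H_def
        by (intro has_vector_derivative_mult_right bounded_linear.has_vector_derivative[OF bounded_linear_scaleR_right])
      moreover have "emb (- \<i>) * (inverse R *\<^sub>R - (G R t * (R *\<^sub>R emb (\<i> * cis t)) * G R t)) = fR R t"
      proof -
        have "G R t * (R *\<^sub>R emb (\<i> * cis t)) * G R t = R *\<^sub>R (emb \<i> * (G R t * emb (cis t) * G R t))"
          by (simp add: emb_mult) (metis emb_commute mult.assoc)
        then have "emb (- \<i>) * (inverse R *\<^sub>R - (G R t * (R *\<^sub>R emb (\<i> * cis t)) * G R t))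
             = - ((emb (- \<i>) * emb \<i>) * (G R t * emb (cis t) * G R t))"
          using that(2) by (simp add: mult.assoc)
        also have "emb (- \<i>) * emb \<i> = (1::'a)" by (simp add: emb_mult[symmetric])
        finally show ?thesis by (simp add: fR_def)
      qed
      ultimately show ?thesis by simp
    qed
    have "(fR R has_integral (H (2*pi) - H 0)) {0..2*pi}"
      by (rule fundamental_theorem_of_calculus) (auto intro: Hd)
    moreover have "H (2*pi) = H 0" by (simp add: H_def G_def)
    ultimately show ?thesis by (simp add: integral_unique)
  qed
  have contJ: "continuous_on U J" using Jd by (rule continuous_on_vector_derivative)
  have Jconst: "J r = J c" if "r \<in> U" "c \<in> U" for r c
  proof (rule has_derivative_zero_unique_strong_convex[of U "{0}" J c "J c" r])
    show "convex U" by (simp add: U_def)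
    fix y assume y: "y \<in> U - {0}"
    then have "(J has_vector_derivative 0) (at y within U)" using Jd[of y] fR0[of y] by auto
    then show "(J has_derivative (\<lambda>h. 0)) (at y within U)" by (simp add: has_vector_derivative_def)
  qed (use that contJ in auto)
  have Jsmall: "norm (J c) \<le> 2 * pi / (c - norm x)" if "c \<in> U" "c > norm x" for c
  proof -
    have b: "norm (G c t) \<le> 1 / (c - norm x)" for t
    proof -
      have "cmod (complex_of_real c * cis t) > norm x" using that by (simp add: norm_mult)
      moreover have "\<bar>c\<bar> = c" using that(2) norm_ge_zero[of x] by linarith
      ultimately show ?thesis using resolvent_large[of x "complex_of_real c * cis t"]
        by (simp add: G_def E_emb norm_mult)
    qed
    have "0 \<le> 1 / (c - norm x)" using that by simp
    from has_integral_bound[OF this integrable_integral[OF intG[OF that(1)]]] b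
    have "norm (J c) \<le> 1 / (c - norm x) * (2 * pi)"
      unfolding J_def by simp
    then show ?thesis by simp
  qed
  have "norm (J R) \<le> e" if "e > 0" for e
  proof -
    define c where "c = max R1 (norm x) + 2 * pi / e"
    have "2 * pi / e > 0" using that by simp
    then have c1: "c \<in> U" by (simp add: c_def U_def)
    have c2: "c - norm x \<ge> 2 * pi / e" using that by (simp add: c_def)
    have c3: "c > norm x" using c2 that by (smt (verit) divide_pos_pos pi_gt_zero)
    have "norm (J R) = norm (J c)" using Jconst[of R c] c1 R by (simp add: U_def)
    also have "\<dots> \<le> 2 * pi / (c - norm x)" using Jsmall[OF c1 c3] .
    also have "\<dots> \<le> 2 * pi / (2 * pi / e)" using c2 c3 that by (intro divide_left_mono) (auto intro!: mult_pos_pos divide_pos_pos)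
    also have "\<dots> = e" by simp
    finally show ?thesis .
  qed
  then have "J R = 0" by (metis dense_le norm_le_zero_iff linorder_not_le)
  then show ?thesis by (simp add: J_def G_def[abs_def])
qed

lemma circ_cont:
  fixes x :: "'a::unital_cstar_algebra"
  assumes inv: "\<And>t. alg_invertible (R *\<^sub>R emb (cis t) - x)"
  shows "continuous_on S (\<lambda>t. ainv (R *\<^sub>R emb (cis t) - x))"
  by (rule continuous_on_compose2[OF ainv_continuous_on]) (auto intro!: continuous_intros inv)

lemma spectrum_nonempty: "alg_spectrum (x::'a::unital_cstar_algebra) \<noteq> {}"
proof
  assume e: "alg_spectrum x = {}"
  have inv: "alg_invertible (emb z - x)" for z
    using e spec_iff[of z x] invertible_minus_swap by blast
  have "integral (cbox 0 (2*pi)) (\<lambda>t. ainv (0 *\<^sub>R emb (cis t) - x)) = 0"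
    by (rule J_zero[of 0]) (auto intro: inv)
  then have "(2 * pi) *\<^sub>R ainv (- x) = 0" by simp
  then have "ainv (- x) = 0" by simp
  moreover have "alg_invertible (- x)" using inv[of 0] by simp
  ultimately show False using ainv_nonzero by blast
qed

lemma cis_power_int: "(\<lambda>t. (R *\<^sub>R emb (cis t)) ^ n) = (\<lambda>t. (R ^ n) *\<^sub>R (emb (cis (real n * t)) :: 'a::unital_cstar_algebra))"
proof
  fix t
  have "(R *\<^sub>R emb (cis t)) ^ n = (R ^ n) *\<^sub>R (emb (cis t) ^ n :: 'a)" by (rule scaleR_power)
  also have "(emb (cis t) ^ n :: 'a) = emb (cis t ^ n)" by (rule emb_power[symmetric])
  also have "cis t ^ n = cis (real n * t)" by (rule Complex.DeMoivre)
  finally show "(R *\<^sub>R emb (cis t)) ^ n = (R ^ n) *\<^sub>R (emb (cis (real n * t)) :: 'a)" .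
qed

lemma moment_zero:
  assumes "n \<ge> 1"
  shows "integral (cbox 0 (2*pi)) (\<lambda>t. (R *\<^sub>R emb (cis t)) ^ n) = (0::'a::unital_cstar_algebra)"
proof -
  define V where "V t = emb (- \<i> / of_nat n) * ((R ^ n) *\<^sub>R (emb (cis (real n * t)) :: 'a))" for t
  have nz: "(of_nat n :: complex) \<noteq> 0" using assms by simp
  have Vd: "(V has_vector_derivative (R ^ n) *\<^sub>R emb (cis (real n * t))) (at t within {0..2*pi})" for t
  proof -
    have c: "((\<lambda>t. cis (real n * t)) has_vector_derivative (of_real (real n) * (\<i> * cis (real n * t)))) (at t within {0..2*pi})"
      using has_derivative_cis[OF has_derivative_mult_right[OF has_derivative_ident, of "real n"], of t "{0..2*pi}"]
      by (simp add: has_vector_derivative_def scaleR_conv_of_real ac_simps)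
    have "(V has_vector_derivative emb (- \<i> / of_nat n) * ((R ^ n) *\<^sub>R emb (of_real (real n) * (\<i> * cis (real n * t))))) (at t within {0..2*pi})"
      unfolding V_def
      by (intro has_vector_derivative_mult_right bounded_linear.has_vector_derivative[OF bounded_linear_scaleR_right]
          bounded_linear.has_vector_derivative[OF bounded_linear_emb c])
    moreover have "emb (- \<i> / of_nat n) * ((R ^ n) *\<^sub>R emb (of_real (real n) * (\<i> * cis (real n * t))))
        = (R ^ n) *\<^sub>R (emb (cis (real n * t)) :: 'a)"
    proof -
      have "- \<i> / of_nat n * (of_real (real n) * (\<i> * cis (real n * t))) = cis (real n * t)"
        using nz by (simp add: field_simps)
      then show ?thesis by (simp only: mult_scaleR_right emb_mult[symmetric])
    qed
    ultimately show ?thesis by (rule has_vector_derivative_eq_rhs)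
  qed
  have hi: "((\<lambda>t. (R ^ n) *\<^sub>R (emb (cis (real n * t)) :: 'a)) has_integral (V (2*pi) - V 0)) {0..2*pi}"
    by (rule fundamental_theorem_of_calculus) (simp_all add: Vd)
  have "cis (real n * (2 * pi)) = 1"
  proof -
    have "real n \<in> \<int>" by simp
    from cis_multiple_2pi[OF this] show ?thesis by (simp add: mult.commute)
  qed
  then have "V (2*pi) = V 0" unfolding V_def by simp
  then have "((\<lambda>t. (R ^ n) *\<^sub>R (emb (cis (real n * t)) :: 'a)) has_integral 0) (cbox 0 (2*pi))"
    using hi by simp
  then have "integral (cbox 0 (2*pi)) (\<lambda>t. (R ^ n) *\<^sub>R (emb (cis (real n * t)) :: 'a)) = 0"
    by (rule integral_unique)
  then show ?thesis by (simp only: cis_power_int)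
qed

lemma integral_mult_right_alg:
  fixes c :: "'a::unital_cstar_algebra"
  assumes "f integrable_on S"
  shows "integral S (\<lambda>t. c * f t) = c * integral S f"
  by (rule integral_unique[OF has_integral_mult_right[OF integrable_integral[OF assms]]])

lemma moments:
  fixes x :: "'a::unital_cstar_algebra" and R1 :: real
  assumes R1: "0 \<le> R1" and inv: "\<And>z. R1 \<le> cmod z \<Longrightarrow> alg_invertible (emb z - x)"
    and R: "R1 \<le> R"
  shows "integral (cbox 0 (2*pi)) (\<lambda>t. (R *\<^sub>R emb (cis t)) ^ Suc n * ainv (R *\<^sub>R emb (cis t) - x)) = (2*pi) *\<^sub>R x ^ n"
proof -
  define u where "u t = R *\<^sub>R (emb (cis t) :: 'a)" for t
  define G where "G t = ainv (u t - x)" for t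
  define T where "T m = integral (cbox 0 (2*pi)) (\<lambda>t. u t ^ m * G t)" for m
  have Pinv: "alg_invertible (u t - x)" for t
  proof -
    have "R1 \<le> cmod (complex_of_real R * cis t)" using R R1 by (simp add: norm_mult)
    from inv[OF this] show ?thesis by (simp add: E_emb u_def)
  qed
  have contG: "continuous_on (cbox 0 (2*pi)) G"
    unfolding G_def u_def by (rule circ_cont) (use Pinv u_def in auto)
  have contu: "continuous_on (cbox 0 (2*pi)) (\<lambda>t. u t ^ m)" for m
    unfolding u_def by (intro continuous_intros)
  have int1: "(\<lambda>t. u t ^ m * G t) integrable_on cbox 0 (2*pi)" for m
    by (intro integrable_continuous continuous_intros contG contu)
  have int2: "(\<lambda>t. u t ^ m) integrable_on cbox 0 (2*pi)" for m
    by (intro integrable_continuous contu)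
  have uG: "u t * G t = 1 + x * G t" for t
  proof -
    have "(u t - x) * G t = 1" unfolding G_def using ainv[OF Pinv] by simp
    then show ?thesis by (simp add: algebra_simps)
  qed
  have ucomm: "u t ^ m * x = x * u t ^ m" for t m
  proof -
    have "u t ^ m = emb ((complex_of_real R * cis t) ^ m)" by (simp add: u_def E_emb emb_power)
    then show ?thesis by (simp add: emb_commute)
  qed
  have step: "u t ^ Suc m * G t = u t ^ m + x * (u t ^ m * G t)" for t m
  proof -
    have "u t ^ Suc m * G t = u t ^ m * (u t * G t)" by (simp only: power_Suc2 mult.assoc)
    also have "\<dots> = u t ^ m + (u t ^ m * x) * G t" by (simp add: uG distrib_left mult.assoc)
    also have "\<dots> = u t ^ m + x * (u t ^ m * G t)" by (simp add: ucomm mult.assoc)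
    finally show ?thesis .
  qed
  have Tstep: "T (Suc m) = integral (cbox 0 (2*pi)) (\<lambda>t. u t ^ m) + x * T m" for m
  proof -
    have "T (Suc m) = integral (cbox 0 (2*pi)) (\<lambda>t. u t ^ m + x * (u t ^ m * G t))"
      unfolding T_def by (simp only: step)
    also have "\<dots> = integral (cbox 0 (2*pi)) (\<lambda>t. u t ^ m) + integral (cbox 0 (2*pi)) (\<lambda>t. x * (u t ^ m * G t))"
      by (rule integral_add[OF int2 integrable_on_mult_right[OF int1]])
    also have "integral (cbox 0 (2*pi)) (\<lambda>t. x * (u t ^ m * G t)) = x * T m"
      unfolding T_def by (rule integral_mult_right_alg[OF int1])
    finally show ?thesis .
  qed
  have T0: "T 0 = 0"
    unfolding T_def G_def u_def using J_zero[OF R1 inv R] by simp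
  have I0: "integral (cbox 0 (2*pi)) (\<lambda>t. u t ^ 0) = (2*pi) *\<^sub>R 1"
    by (simp add: box_real)
  have Im: "integral (cbox 0 (2*pi)) (\<lambda>t. u t ^ Suc m) = 0" for m
    unfolding u_def by (rule moment_zero) simp
  have "T (Suc m) = (2*pi) *\<^sub>R x ^ m" for m
  proof (induction m)
    case 0 then show ?case using Tstep[of 0] T0 I0 by simp
  next
    case (Suc m)
    then show ?case using Tstep[of "Suc m"] Im[of m] by (simp add: mult_scaleR_right)
  qed
  then show ?thesis unfolding T_def G_def u_def .
qed

lemma gelfand_bound:
  fixes x :: "'a::unital_cstar_algebra"
  assumes R: "0 < R" and inv: "\<And>z. R \<le> cmod z \<Longrightarrow> alg_invertible (emb z - x)"
  shows "\<exists>M>0. \<forall>n. norm (x ^ n) \<le> M * R ^ Suc n"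
proof -
  define G where "G t = ainv (R *\<^sub>R emb (cis t) - x)" for t
  have Pinv: "alg_invertible (R *\<^sub>R emb (cis t) - x)" for t
  proof -
    have "R \<le> cmod (complex_of_real R * cis t)" using R by (simp add: norm_mult)
    from inv[OF this] show ?thesis by (simp add: E_emb)
  qed
  have contG: "continuous_on (cbox 0 (2*pi)) G"
    unfolding G_def by (rule circ_cont) (use Pinv in auto)
  have "bounded (G ` cbox 0 (2*pi))"
    by (rule compact_imp_bounded[OF compact_continuous_image[OF contG compact_cbox]])
  then obtain M where M: "M > 0" "\<And>t. t \<in> cbox 0 (2*pi) \<Longrightarrow> norm (G t) \<le> M"
    unfolding bounded_pos by auto
  have "norm (x ^ n) \<le> M * R ^ Suc n" for n
  proof -
    have hi: "((\<lambda>t. (R *\<^sub>R emb (cis t)) ^ Suc n * G t) has_integral (2*pi) *\<^sub>R x ^ n) (cbox 0 (2*pi))"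
    proof -
      have cont: "continuous_on (cbox 0 (2*pi)) (\<lambda>t. (R *\<^sub>R emb (cis t)) ^ Suc n * G t)"
        by (intro continuous_intros contG)
      have "integral (cbox 0 (2*pi)) (\<lambda>t. (R *\<^sub>R emb (cis t)) ^ Suc n * G t) = (2*pi) *\<^sub>R x ^ n"
        unfolding G_def by (rule moments[of R]) (use R inv in auto)
      then show ?thesis using integrable_integral[OF integrable_continuous[OF cont]] by simp
    qed
    have b: "norm ((R *\<^sub>R emb (cis t)) ^ Suc n * G t) \<le> R ^ Suc n * M" if "t \<in> cbox 0 (2*pi)" for t
    proof -
      have "norm ((R *\<^sub>R emb (cis t)) ^ Suc n * G t) \<le> norm ((R *\<^sub>R (emb (cis t) :: 'a)) ^ Suc n) * norm (G t)"
        by (rule norm_mult_ineq)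
      also have "\<dots> \<le> norm (R *\<^sub>R (emb (cis t) :: 'a)) ^ Suc n * M"
        by (intro mult_mono norm_power_ineq M(2)[OF that]) auto
      also have "norm (R *\<^sub>R (emb (cis t) :: 'a)) = R" using R by simp
      finally show ?thesis .
    qed
    have "0 \<le> R ^ Suc n * M" using R M by simp
    from has_integral_bound[OF this hi b]
    have "2 * pi * norm (x ^ n) \<le> R ^ Suc n * M * (2 * pi)" by simp
    then show ?thesis by (simp add: mult.commute)
  qed
  then show ?thesis using M(1) by blast
qed

lemma selfadj_norm_le:
  fixes h :: "'a::unital_cstar_algebra"
  assumes sa: "cstar h = h" and r0: "0 \<le> r0" and inv: "\<And>z. r0 < cmod z \<Longrightarrow> alg_invertible (emb z - h)"
  shows "norm h \<le> r0"
proof (rule field_le_epsilon)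
  fix e :: real assume e: "0 < e"
  define R where "R = r0 + e"
  have R0: "0 < R" using e r0 by (simp add: R_def)
  obtain M where M: "M > 0" "\<And>n. norm (h ^ n) \<le> M * R ^ Suc n"
    using gelfand_bound[OF R0, of h] inv R_def e by force
  show "norm h \<le> r0 + e"
  proof (rule ccontr)
    assume "\<not> norm h \<le> r0 + e"
    then have gt: "R < norm h" by (simp add: R_def)
    define q where "q = norm h / R"
    have q1: "1 < q" using gt R0 by (simp add: q_def)
    obtain N where N: "M * R < q ^ N" using real_arch_pow[OF q1] by blast
    have "q ^ N \<le> q ^ (2 ^ N)" using q1 by (intro power_increasing) (auto intro: less_imp_le)
    moreover have "q ^ (2 ^ N) \<le> M * R"
    proof -
      have "norm h ^ (2 ^ N) \<le> M * R ^ Suc (2 ^ N)"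
        using M(2)[of "2^N"] norm_selfadj_pow2[OF sa, of N] by simp
      then have "(norm h / R) ^ (2 ^ N) \<le> M * R"
        using R0 by (simp add: power_divide divide_le_eq)
      then show ?thesis by (simp add: q_def)
    qed
    ultimately show False using N by simp
  qed
qed

definition pos :: "'a::unital_cstar_algebra \<Rightarrow> bool" where
  "pos h \<longleftrightarrow> cstar h = h \<and> (\<forall>z\<in>alg_spectrum h. 0 \<le> Re z)"

lemma cstar_of_real[simp]: "cstar (of_real t :: 'a::unital_cstar_algebra) = of_real t"
  by (metis cstar_emb emb_of_real complex_cnj_complex_of_real)

lemma spec_shift:
  fixes h :: "'a::unital_cstar_algebra"
  shows "z \<in> alg_spectrum h \<longleftrightarrow> complex_of_real t - z \<in> alg_spectrum (of_real t - h)"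
proof -
  have eq: "of_real t - h - emb (complex_of_real t - z) = - (h - emb z)"
    by (simp add: emb_diff emb_of_real)
  show ?thesis by (simp only: spec_iff eq invertible_uminus)
qed

lemma pos_iff:
  fixes h :: "'a::unital_cstar_algebra"
  assumes sa: "cstar h = h" and t: "norm h \<le> t"
  shows "pos h \<longleftrightarrow> norm (of_real t - h) \<le> t"
proof
  assume p: "pos h"
  have t0: "0 \<le> t" using t norm_ge_zero order_trans by blast
  show "norm (of_real t - h) \<le> t"
  proof (rule selfadj_norm_le)
    show "cstar (of_real t - h) = of_real t - h" by (simp add: cstar_diff sa)
    show "0 \<le> t" by (rule t0)
    fix w assume w: "t < cmod w"
    show "alg_invertible (emb w - (of_real t - h))"
    proof (rule ccontr)
      assume "\<not> alg_invertible (emb w - (of_real t - h))"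
      then have "w \<in> alg_spectrum (of_real t - h)"
        unfolding spec_iff using invertible_minus_swap by blast
      then have s: "complex_of_real t - w \<in> alg_spectrum h"
        using spec_shift[of "complex_of_real t - w" h t] by simp
      have im: "Im (complex_of_real t - w) = 0" by (rule spec_selfadj_real[OF sa s])
      have re: "0 \<le> Re (complex_of_real t - w)" using p s unfolding pos_def by blast
      have nb: "cmod (complex_of_real t - w) \<le> t" using spec_bound[OF s] t by simp
      have "Im w = 0" using im by simp
      then have "cmod w = \<bar>Re w\<bar>" by (simp add: cmod_def)
      moreover have "Re w \<le> t" using re by simp
      moreover have "\<bar>t - Re w\<bar> \<le> t" using nb \<open>Im w = 0\<close> by (simp add: cmod_def)
      ultimately show False using w by linarith
    qed
  qed
next
  assume n: "norm (of_real t - h) \<le> t"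
  show "pos h" unfolding pos_def
  proof (intro conjI ballI sa)
    fix z assume z: "z \<in> alg_spectrum h"
    have "complex_of_real t - z \<in> alg_spectrum (of_real t - h)" using spec_shift z by blast
    then have "cmod (complex_of_real t - z) \<le> t" using spec_bound n by (meson order_trans)
    moreover have "\<bar>t - Re z\<bar> \<le> cmod (complex_of_real t - z)"
      using abs_Re_le_cmod[of "complex_of_real t - z"] by simp
    ultimately show "0 \<le> Re z" by linarith
  qed
qed

lemma pos_add:
  fixes h k :: "'a::unital_cstar_algebra"
  assumes "pos h" "pos k"
  shows "pos (h + k)"
proof -
  have sh: "cstar h = h" and sk: "cstar k = k" using assms unfolding pos_def by auto
  have h1: "norm (of_real (norm h) - h) \<le> norm h" using pos_iff[OF sh order_refl] assms(1) by blast
  have k1: "norm (of_real (norm k) - k) \<le> norm k" using pos_iff[OF sk order_refl] assms(2) by blast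
  have s: "cstar (h + k) = h + k" by (simp add: cstar_add sh sk)
  have b: "norm (h + k) \<le> norm h + norm k" by (rule norm_triangle_ineq)
  have "norm (of_real (norm h + norm k) - (h + k)) = norm ((of_real (norm h) - h) + (of_real (norm k) - k))"
    by (simp add: of_real_add algebra_simps)
  then have "norm (of_real (norm h + norm k) - (h + k)) \<le> norm h + norm k"
    using norm_triangle_ineq[of "of_real (norm h) - h" "of_real (norm k) - k"] h1 k1 by linarith
  then show ?thesis using pos_iff[OF s b] by blast
qed

lemma pos_square:
  fixes u :: "'a::unital_cstar_algebra"
  assumes sa: "cstar u = u"
  shows "pos (u * u)"
  unfolding pos_def
proof (intro conjI ballI)
  show "cstar (u * u) = u * u" by (simp add: cstar_mult sa)
  fix z assume "z \<in> alg_spectrum (u * u)"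
  then obtain v where v: "v \<in> alg_spectrum u" "z = v * v" using spec_square by blast
  have "Im v = 0" by (rule spec_selfadj_real[OF sa v(1)])
  then show "0 \<le> Re z" using v(2) by simp
qed

lemma pos_proj:
  fixes e :: "'a::unital_cstar_algebra"
  assumes "e * e = e" "cstar e = e"
  shows "pos e"
  unfolding pos_def
proof (intro conjI ballI assms(2))
  fix z assume "z \<in> alg_spectrum e"
  moreover have "e * e = emb 1 * e" using assms(1) by simp
  ultimately have "z = 0 \<or> z = 1" using spec_quadratic by blast
  then show "0 \<le> Re z" by auto
qed

lemma pos_nonpos_zero:
  fixes w :: "'a::unital_cstar_algebra"
  assumes "pos w" "\<And>z. z \<in> alg_spectrum w \<Longrightarrow> Re z \<le> 0"
  shows "w = 0"
proof -
  have sa: "cstar w = w" using assms(1) unfolding pos_def by simp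
  have "norm w \<le> 0"
  proof (rule selfadj_norm_le[OF sa order_refl])
    fix z :: complex assume z: "0 < cmod z"
    show "alg_invertible (emb z - w)"
    proof (rule ccontr)
      assume "\<not> alg_invertible (emb z - w)"
      then have zs: "z \<in> alg_spectrum w" unfolding spec_iff using invertible_minus_swap by blast
      have "Im z = 0" by (rule spec_selfadj_real[OF sa zs])
      moreover have "Re z = 0" using assms zs unfolding pos_def by force
      ultimately have "z = 0" by (simp add: complex_eq_iff)
      then show False using z by simp
    qed
  qed
  then show ?thesis by simp
qed

lemma kv_lemma:
  fixes y e :: "'a::unital_cstar_algebra"
  assumes ee: "e * e = e" and se: "cstar e = e" and yy: "cstar y * y = - e"
  shows "e = 0"
proof -
  let ?s = "cstar y"
  define u where "u = y + ?s"
  define v where "v = emb \<i> * (y - ?s)"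
  have su: "cstar u = u" by (simp add: u_def cstar_add cstar_cstar add.commute)
  have sv: "cstar v = v"
  proof -
    have "cstar v = (?s - y) * emb (- \<i>)"
      by (simp add: v_def cstar_mult cstar_diff cstar_cstar cstar_emb)
    also have "\<dots> = emb \<i> * (y - ?s)"
      by (simp add: emb_uminus emb_commute[symmetric] algebra_simps)
    finally show ?thesis by (simp add: v_def)
  qed
  have vv: "v * v = - ((y - ?s) * (y - ?s))"
  proof -
    have "v * v = (emb \<i> * emb \<i>) * ((y - ?s) * (y - ?s))" unfolding v_def
      by (metis emb_commute mult.assoc)
    also have "emb \<i> * emb \<i> = (- 1 :: 'a)" by (simp add: emb_mult[symmetric] emb_uminus)
    finally show ?thesis by simp
  qed
  define w where "w = y * ?s + y * ?s"
  have wdef: "w = u * u + v * v + (e + e)"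
  proof -
    have "u * u + v * v = (y * ?s + y * ?s) + (?s * y + ?s * y)"
      unfolding vv u_def by (simp add: algebra_simps)
    then show ?thesis unfolding w_def yy by simp
  qed
  have pw: "pos w" unfolding wdef
    by (intro pos_add pos_square su sv pos_proj ee se)
  have wspec: "Re z \<le> 0" if z: "z \<in> alg_spectrum w" for z
  proof (cases "z = 0")
    case True then show ?thesis by simp
  next
    case False
    have "w = (y + y) * ?s" by (simp add: w_def algebra_simps)
    then have "z \<in> alg_spectrum (?s * (y + y))" using spec_swap[of z "y + y" ?s] z False by simp
    moreover have "?s * (y + y) = - (e + e)" by (simp add: distrib_left yy)
    ultimately have zs: "z \<in> alg_spectrum (- (e + e))" by simp
    have ff: "(- (e + e)) * (- (e + e)) = emb (- 2) * (- (e + e))"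
    proof -
      have m2: "emb (- 2) = - (1 + 1 :: 'a)"
        by (metis emb_1 emb_add emb_uminus one_add_one)
      have l: "(- (e + e)) * (- (e + e)) = (e + e) + (e + e)"
        by (simp only: minus_mult_minus distrib_left distrib_right ee)
      have r: "- (1 + 1 :: 'a) * (- (e + e)) = (e + e) + (e + e)"
        by (simp only: minus_mult_minus distrib_left distrib_right mult_1_left)
      show ?thesis unfolding m2 l r ..
    qed
    from spec_quadratic[OF ff zs] have "z = 0 \<or> z = - 2" .
    then show ?thesis by auto
  qed
  have "w = 0" by (rule pos_nonpos_zero[OF pw wspec])
  then have "(2::real) *\<^sub>R (y * ?s) = 0" by (simp add: w_def scaleR_2)
  then have ys: "y * ?s = 0" by simp
  have "norm ?s ^ 2 = 0" using cstar_identity[of ?s] ys by (simp add: cstar_cstar)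
  then have "?s = 0" by simp
  then have "y = 0" by (metis cstar_0 cstar_cstar)
  then show ?thesis using yy by simp
qed

lemma pascal:
  fixes f :: "nat \<Rightarrow> 'a::real_vector"
  shows "(\<Sum>j\<le>Suc n. real (Suc n choose j) *\<^sub>R f j)
       = (\<Sum>j\<le>n. real (n choose j) *\<^sub>R f j) + (\<Sum>j\<le>n. real (n choose j) *\<^sub>R f (Suc j))"
proof -
  have "(\<Sum>j\<le>Suc n. real (Suc n choose j) *\<^sub>R f j)
      = f 0 + (\<Sum>j\<le>n. real (Suc n choose Suc j) *\<^sub>R f (Suc j))"
    by (simp add: sum.atMost_Suc_shift del: sum.atMost_Suc binomial_Suc_Suc)
  also have "\<dots> = f 0 + (\<Sum>j\<le>n. real (n choose Suc j) *\<^sub>R f (Suc j)) + (\<Sum>j\<le>n. real (n choose j) *\<^sub>R f (Suc j))"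
    by (simp add: scaleR_add_left sum.distrib add.assoc add.commute)
  also have "f 0 + (\<Sum>j\<le>n. real (n choose Suc j) *\<^sub>R f (Suc j)) = (\<Sum>j\<le>Suc n. real (n choose j) *\<^sub>R f j)"
    by (simp add: sum.atMost_Suc_shift del: sum.atMost_Suc)
  also have "\<dots> = (\<Sum>j\<le>n. real (n choose j) *\<^sub>R f j)"
    by simp
  finally show ?thesis .
qed

lemma Cab_scaleR: "Cab_one c b k = (\<Sum>j\<le>k. real (k choose j) *\<^sub>R ((-1) ^ j *\<^sub>R (c ^ (k - j) * b ^ j)))"
  unfolding Cab_one_def
proof (rule sum.cong[OF refl])
  fix j
  have e: "((-1) ^ j * of_nat (k choose j) :: 'a) = of_real ((-1) ^ j * real (k choose j))" by simp
  show "((-1) ^ j * of_nat (k choose j)) * (c ^ (k - j) * b ^ j) = real (k choose j) *\<^sub>R ((-1) ^ j *\<^sub>R (c ^ (k - j) * b ^ j))"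
    unfolding e scaleR_conv_of_real[symmetric] by (simp add: mult.commute)
qed

lemma Cab_Suc:
  fixes c b :: "'a::unital_cstar_algebra"
  shows "Cab_one c b (Suc k) = c * Cab_one c b k - Cab_one c b k * b"
proof -
  define f where "f j = ((-1::real) ^ j) *\<^sub>R (c ^ (Suc k - j) * b ^ j)" for j
  have "Cab_one c b (Suc k) = (\<Sum>j\<le>Suc k. real (Suc k choose j) *\<^sub>R f j)"
    by (simp add: Cab_scaleR f_def)
  also have "\<dots> = (\<Sum>j\<le>k. real (k choose j) *\<^sub>R f j) + (\<Sum>j\<le>k. real (k choose j) *\<^sub>R f (Suc j))"
    by (rule pascal)
  also have "(\<Sum>j\<le>k. real (k choose j) *\<^sub>R f j) = c * Cab_one c b k"
    unfolding Cab_scaleR sum_distrib_left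
  proof (rule sum.cong[OF refl])
    fix j assume "j \<in> {..k}"
    then have "Suc k - j = Suc (k - j)" by auto
    then show "real (k choose j) *\<^sub>R f j = c * (real (k choose j) *\<^sub>R ((-1) ^ j *\<^sub>R (c ^ (k - j) * b ^ j)))"
      by (simp add: f_def mult.assoc)
  qed
  also have "(\<Sum>j\<le>k. real (k choose j) *\<^sub>R f (Suc j)) = - (Cab_one c b k * b)"
    unfolding Cab_scaleR sum_distrib_right sum_negf[symmetric]
  proof (rule sum.cong[OF refl])
    fix j assume "j \<in> {..k}"
    show "real (k choose j) *\<^sub>R f (Suc j) = - (real (k choose j) *\<^sub>R ((-1) ^ j *\<^sub>R (c ^ (k - j) * b ^ j)) * b)"
      by (simp add: f_def mult.assoc power_commutes)
  qed
  finally show ?thesis by simp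
qed

lemma expansionA:
  fixes a b c :: "'a::unital_cstar_algebra"
  assumes ba: "b * a = 1"
  shows "c ^ n * a ^ n = (\<Sum>k\<le>n. real (n choose k) *\<^sub>R (Cab_one c b k * a ^ k))"
proof (induction n)
  case 0 then show ?case by (simp add: Cab_one_def)
next
  case (Suc n)
  define f where "f k = Cab_one c b k * a ^ k" for k
  have "c ^ Suc n * a ^ Suc n = c * (c ^ n * a ^ n) * a" by (simp add: mult.assoc power_commutes)
  also have "\<dots> = (\<Sum>k\<le>n. real (n choose k) *\<^sub>R (c * Cab_one c b k * a ^ k * a))"
    unfolding Suc sum_distrib_left sum_distrib_right by (simp add: mult.assoc)
  also have "\<dots> = (\<Sum>k\<le>n. real (n choose k) *\<^sub>R f (Suc k)) + (\<Sum>k\<le>n. real (n choose k) *\<^sub>R f k)"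
  proof -
    have "c * Cab_one c b k * a ^ k * a = f (Suc k) + f k" for k
    proof -
      have "c * Cab_one c b k = Cab_one c b (Suc k) + Cab_one c b k * b" by (simp add: Cab_Suc)
      moreover have "b * (a ^ k * a) = a ^ k"
        by (metis ba mult.assoc mult.left_neutral power_Suc power_Suc2)
      ultimately show ?thesis by (simp add: f_def distrib_right mult.assoc power_commutes)
    qed
    then show ?thesis by (simp add: scaleR_add_right sum.distrib)
  qed
  also have "\<dots> = (\<Sum>k\<le>Suc n. real (Suc n choose k) *\<^sub>R f k)"
    by (subst pascal) (rule add.commute)
  finally show ?case by (simp add: f_def)
qed

lemma expansionB:
  fixes b c d :: "'a::unital_cstar_algebra"
  assumes dc: "d * c = 1"
  shows "d ^ n * b ^ n = (\<Sum>k\<le>n. real (n choose k) *\<^sub>R ((-1) ^ k *\<^sub>R (d ^ k * Cab_one c b k)))"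
proof (induction n)
  case 0 then show ?case by (simp add: Cab_one_def)
next
  case (Suc n)
  define g where "g k = ((-1::real) ^ k) *\<^sub>R (d ^ k * Cab_one c b k)" for k
  have "d ^ Suc n * b ^ Suc n = d * (d ^ n * b ^ n) * b" by (simp add: mult.assoc power_commutes)
  also have "\<dots> = (\<Sum>k\<le>n. real (n choose k) *\<^sub>R ((-1) ^ k *\<^sub>R (d * d ^ k * Cab_one c b k * b)))"
    unfolding Suc sum_distrib_left sum_distrib_right by (simp add: mult.assoc)
  also have "\<dots> = (\<Sum>k\<le>n. real (n choose k) *\<^sub>R g k) + (\<Sum>k\<le>n. real (n choose k) *\<^sub>R g (Suc k))"
  proof -
    have "(-1::real) ^ k *\<^sub>R (d * d ^ k * Cab_one c b k * b) = g k + g (Suc k)" for k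
    proof -
      have "Cab_one c b k * b = c * Cab_one c b k - Cab_one c b (Suc k)" by (simp add: Cab_Suc)
      moreover have "d * d ^ k * c = d ^ k"
        by (metis dc mult.assoc mult.right_neutral power_Suc power_Suc2)
      ultimately have "d * d ^ k * Cab_one c b k * b = d ^ k * Cab_one c b k - d ^ Suc k * Cab_one c b (Suc k)"
        by (simp add: mult.assoc right_diff_distrib) (simp add: mult.assoc[symmetric])
      then show ?thesis by (simp add: g_def scaleR_diff_right)
    qed
    then show ?thesis by (simp add: scaleR_add_right sum.distrib)
  qed
  also have "\<dots> = (\<Sum>k\<le>Suc n. real (Suc n choose k) *\<^sub>R g k)"
    by (rule pascal[symmetric])
  finally show ?case by (simp add: g_def)
qed

lemma norm_binom_sum:
  fixes X :: "nat \<Rightarrow> 'a::real_normed_vector"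
  shows "norm (\<Sum>k\<le>n. real (n choose k) *\<^sub>R X k) \<le> (\<Sum>k\<le>n. real (n choose k) * norm (X k))"
  by (rule order_trans[OF norm_sum]) simp

lemma rho_bound:
  fixes \<delta> :: "nat \<Rightarrow> real" and \<gamma> :: real
  assumes d0: "\<And>n. 0 \<le> \<delta> n"
    and rho: "limsup (\<lambda>n. ereal (root n (\<delta> n))) = 0"
    and g0: "0 \<le> \<gamma>"
    and H: "\<And>n. \<gamma> ^ (2 * n) \<le> (\<Sum>k\<le>n. real (n choose k) * \<delta> k * \<gamma> ^ k)"
  shows "\<gamma> \<le> 1"
proof (rule ccontr)
  assume "\<not> \<gamma> \<le> 1"
  then have g1: "1 < \<gamma>" by simp
  define \<epsilon> where "\<epsilon> = (\<gamma>\<^sup>2 - 1) / (2 * \<gamma>)"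
  have gsq: "1 < \<gamma>\<^sup>2" using g1 by (simp add: one_less_power)
  have e0: "0 < \<epsilon>" unfolding \<epsilon>_def using g1 gsq by (intro divide_pos_pos) auto
  have eg: "1 + \<epsilon> * \<gamma> = (1 + \<gamma>\<^sup>2) / 2" using g1 unfolding \<epsilon>_def by (simp add: field_simps)
  have "ereal \<epsilon> > limsup (\<lambda>n. ereal (root n (\<delta> n)))" using rho e0 by simp
  from Limsup_lessD[OF this] obtain N0 where N0: "\<And>n. n \<ge> N0 \<Longrightarrow> root n (\<delta> n) < \<epsilon>"
    unfolding eventually_sequentially by auto
  define N where "N = Suc N0"
  have dsmall: "\<delta> n \<le> \<epsilon> ^ n" if "n \<ge> N" for n
  proof -
    have n0: "0 < n" using that by (simp add: N_def)
    have r: "root n (\<delta> n) < \<epsilon>" using N0 that by (simp add: N_def)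
    have "\<delta> n = root n (\<delta> n) ^ n" using real_root_pow_pos2[OF n0 d0[of n]] by simp
    also have "\<dots> \<le> \<epsilon> ^ n" using r by (intro power_mono) (auto simp: real_root_ge_zero d0)
    finally show ?thesis .
  qed
  define K where "K = 1 + (\<Sum>k<N. \<delta> k / \<epsilon> ^ k)"
  have K1: "1 \<le> K" unfolding K_def using d0 e0 by (simp add: sum_nonneg)
  have dK: "\<delta> k \<le> K * \<epsilon> ^ k" for k
  proof (cases "k < N")
    case True
    have "\<delta> k / \<epsilon> ^ k \<le> (\<Sum>k<N. \<delta> k / \<epsilon> ^ k)"
      by (rule member_le_sum) (use True d0 e0 in auto)
    then have "\<delta> k / \<epsilon> ^ k \<le> K" unfolding K_def by simp
    then show ?thesis using e0 by (simp add: divide_le_eq)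
  next
    case False
    then have "\<delta> k \<le> \<epsilon> ^ k" using dsmall by simp
    also have "\<dots> \<le> K * \<epsilon> ^ k" using K1 e0 by simp
    finally show ?thesis .
  qed
  define \<rho> where "\<rho> = \<gamma>\<^sup>2 / (1 + \<epsilon> * \<gamma>)"
  have pos: "0 < 1 + \<epsilon> * \<gamma>" using e0 g1 by (simp add: add_pos_nonneg)
  have r1: "1 < \<rho>" unfolding \<rho>_def eg using gsq by (simp add: field_simps)
  have "\<rho> ^ n \<le> K" for n
  proof -
    have "(\<gamma>\<^sup>2) ^ n = \<gamma> ^ (2 * n)" by (simp add: power_mult)
    also have "\<dots> \<le> (\<Sum>k\<le>n. real (n choose k) * \<delta> k * \<gamma> ^ k)" by (rule H)
    also have "\<dots> \<le> (\<Sum>k\<le>n. real (n choose k) * (K * \<epsilon> ^ k) * \<gamma> ^ k)"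
      by (intro sum_mono mult_right_mono mult_left_mono dK) (use g0 in auto)
    also have "\<dots> = K * (\<epsilon> * \<gamma> + 1) ^ n"
    proof -
      have "(\<epsilon> * \<gamma> + 1) ^ n = (\<Sum>k\<le>n. real (n choose k) * (\<epsilon> * \<gamma>) ^ k)"
        using binomial_ring[of "\<epsilon> * \<gamma>" 1 n] by simp
      then have "K * (\<epsilon> * \<gamma> + 1) ^ n = (\<Sum>k\<le>n. K * (real (n choose k) * (\<epsilon> * \<gamma>) ^ k))"
        by (simp add: sum_distrib_left)
      also have "\<dots> = (\<Sum>k\<le>n. real (n choose k) * (K * \<epsilon> ^ k) * \<gamma> ^ k)"
        by (rule sum.cong[OF refl]) (simp add: power_mult_distrib)
      finally show ?thesis by simp
    qed
    finally have "(\<gamma>\<^sup>2) ^ n \<le> K * (1 + \<epsilon> * \<gamma>) ^ n" by (simp add: add.commute)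
    then show ?thesis unfolding \<rho>_def using pos by (simp add: power_divide divide_le_eq)
  qed
  moreover obtain n where "K < \<rho> ^ n" using real_arch_pow[OF r1] by blast
  ultimately show False by (meson not_le)
qed

lemma spec_inverse:
  fixes x y :: "'a::unital_cstar_algebra"
  assumes xy: "x * y = 1" and yx: "y * x = 1" and z: "z \<in> alg_spectrum x"
  shows "z \<noteq> 0 \<and> inverse z \<in> alg_spectrum y"
proof -
  have xi: "alg_invertible x" using xy yx by (rule invertibleI)
  have z0: "z \<noteq> 0"
  proof
    assume "z = 0"
    then show False using z xi by (simp add: spec_iff)
  qed
  have xc: "emb z * x = x * emb z" by (rule emb_commute)
  have eq: "x - emb z = - (emb z * x * (y - emb (inverse z)))"
  proof -
    have t1: "emb z * x * y = emb z" by (simp only: mult.assoc xy mult_1_right)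
    have zi: "emb z * emb (inverse z) = (1::'a)" by (simp only: emb_mult[symmetric] right_inverse[OF z0] emb_1)
    have t2: "emb z * x * emb (inverse z) = x" by (simp only: xc mult.assoc zi mult_1_right)
    have "emb z * x * (y - emb (inverse z)) = emb z * x * y - emb z * x * emb (inverse z)"
      by (rule right_diff_distrib)
    also have "\<dots> = emb z - x" by (simp only: t1 t2)
    finally show ?thesis by simp
  qed
  have "inverse z \<in> alg_spectrum y"
  proof (rule ccontr)
    assume "inverse z \<notin> alg_spectrum y"
    then have "alg_invertible (y - emb (inverse z))" unfolding spec_iff by simp
    then have "alg_invertible (emb z * x * (y - emb (inverse z)))"
      by (intro invertible_mult invertible_emb z0 xi)
    then have "alg_invertible (x - emb z)" unfolding eq invertible_uminus .
    then show False using z spec_iff by blast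
  qed
  then show ?thesis using z0 by blast
qed

lemma unitary_props:
  fixes u :: "'a::unital_cstar_algebra"
  assumes l: "cstar u * u = 1" and r: "u * cstar u = 1"
  shows "norm u = 1 \<and> spectral_radius u = 1"
proof -
  have "norm u ^ 2 = 1" using cstar_identity[of u] l by simp
  then have "norm u = 1 \<or> norm u = - 1" by (simp only: power2_eq_1_iff)
  then have nu: "norm u = 1" using norm_ge_zero[of u] by linarith
  have s1: "cmod z = 1" if z: "z \<in> alg_spectrum u" for z
  proof -
    have a: "cmod z \<le> 1" using spec_bound[OF z] nu by simp
    from spec_inverse[OF r l z] have z0: "z \<noteq> 0" and iz: "inverse z \<in> alg_spectrum (cstar u)" by auto
    have "cmod (inverse z) \<le> 1" using spec_bound[OF iz] nu by simp
    then have "inverse (cmod z) \<le> 1" by (simp only: norm_inverse)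
    then have "1 \<le> cmod z" using z0 inverse_le_1_iff[of "cmod z"] by auto
    then show ?thesis using a by simp
  qed
  have "cmod ` alg_spectrum u = {1}" using s1 spectrum_nonempty[of u] by auto
  then have "spectral_radius u = 1" unfolding spectral_radius_def by simp
  then show ?thesis using nu by simp
qed

lemma sr_norm_pow:
  fixes x :: "'a::unital_cstar_algebra"
  assumes "spectral_radius x = norm x"
  shows "norm (x ^ n) = norm x ^ n"
proof (cases "n = 0")
  case True then show ?thesis by simp
next
  case False
  then have "norm x ^ n \<le> norm (x ^ n)" using sr_pow[OF spectrum_nonempty[of x], of n] assms by simp
  moreover have "norm (x ^ n) \<le> norm x ^ n" by (rule norm_power_ineq)
  ultimately show ?thesis by simp
qed

lemma alt_sum_zero:
  assumes "n > 0"
  shows "(\<Sum>k\<le>n. (-1) ^ k * of_nat (n choose k) :: 'a::ring_1) = 0"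
proof -
  have "(\<Sum>k\<le>n. (-1) ^ k * of_nat (n choose k) :: int) = 0" by (rule choose_alternating_sum[OF assms])
  then have "of_int (\<Sum>k\<le>n. (-1) ^ k * of_nat (n choose k) :: int) = (0::'a)" by simp
  then show ?thesis by simp
qed

lemma Cab_same: "n > 0 \<Longrightarrow> Cab_one b b n = (0::'a::unital_cstar_algebra)"
proof -
  assume n: "n > 0"
  have "Cab_one b b n = (\<Sum>k\<le>n. ((-1) ^ k * of_nat (n choose k)) * b ^ n)"
    unfolding Cab_one_def
    by (rule sum.cong[OF refl]) (simp add: power_add[symmetric])
  also have "\<dots> = (\<Sum>k\<le>n. (-1) ^ k * of_nat (n choose k)) * b ^ n"
    by (simp add: sum_distrib_right)
  also have "\<dots> = 0" using alt_sum_zero[OF n, where 'a='a] by simp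
  finally show ?thesis .
qed

theorem mainTheorem14:
  fixes a a_inv :: "'a::unital_cstar_algebra"
  assumes "a * a_inv = 1" and "a_inv * a = 1"
  shows "alg_unitary a \<longleftrightarrow>
           (rho (cstar a) a_inv = 0 \<and> spectral_radius a = norm a \<and> spectral_radius a_inv = norm a_inv)"
proof -
  define b where "b = a_inv"
  define c where "c = cstar a"
  define d where "d = cstar b"
  have ab: "a * b = 1" and ba: "b * a = 1" using assms by (auto simp: b_def)
  have dc: "d * c = 1" unfolding d_def c_def by (metis ab cstar_1 cstar_mult)
  have cd: "c * d = 1" unfolding d_def c_def by (metis ba cstar_1 cstar_mult)
  have nc: "norm c = norm a" by (simp add: c_def)
  have nd: "norm d = norm b" by (simp add: d_def)
  show ?thesis
  proof
    assume "alg_unitary a"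
    then have ca: "c * a = 1" and ac: "a * c = 1" unfolding alg_unitary_def c_def by auto
    have cb: "c = b" using inv_unique[OF ab ca] .
    have rho0: "rho c b = 0"
    proof -
      have "eventually (\<lambda>n. ereal (root n (norm (Cab_one c b n))) = 0) sequentially"
        unfolding eventually_sequentially
        by (intro exI[of _ 1]) (simp add: cb Cab_same)
      then have "(\<lambda>n. ereal (root n (norm (Cab_one c b n)))) \<longlonglongrightarrow> 0" by (rule tendsto_eventually)
      then show ?thesis unfolding rho_def by (intro lim_imp_Limsup) simp_all
    qed
    have ua: "norm a = 1 \<and> spectral_radius a = 1" using unitary_props[of a] ca ac c_def by simp
    have csb: "cstar b = a" using cb by (metis c_def cstar_cstar)
    have "cstar b * b = 1" "b * cstar b = 1" using ab ba csb by simp_all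
    then have ub: "norm b = 1 \<and> spectral_radius b = 1" using unitary_props[of b] by simp
    show "rho (cstar a) a_inv = 0 \<and> spectral_radius a = norm a \<and> spectral_radius a_inv = norm a_inv"
      using rho0 ua ub by (simp add: c_def b_def)
  next
    assume H: "rho (cstar a) a_inv = 0 \<and> spectral_radius a = norm a \<and> spectral_radius a_inv = norm a_inv"
    have rho0: "limsup (\<lambda>n. ereal (root n (norm (Cab_one c b n)))) = 0"
      using H by (simp add: rho_def c_def b_def)
    have pa: "norm (a ^ n) = norm a ^ n" for n by (rule sr_norm_pow) (use H in simp)
    have pb: "norm (b ^ n) = norm b ^ n" for n by (rule sr_norm_pow) (use H in \<open>simp add: b_def\<close>)
    have na1: "norm a \<le> 1"
    proof (rule rho_bound[OF _ rho0 norm_ge_zero])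
      fix n
      have "norm a ^ (2 * n) = norm (c ^ n * a ^ n)"
        using cstar_identity[of "a ^ n"] pa by (simp add: c_def cstar_power power_mult power_mult_distrib mult.commute)
      also have "\<dots> \<le> (\<Sum>k\<le>n. real (n choose k) * norm (Cab_one c b k * a ^ k))"
        unfolding expansionA[OF ba] by (rule norm_binom_sum)
      also have "\<dots> \<le> (\<Sum>k\<le>n. real (n choose k) * norm (Cab_one c b k) * norm a ^ k)"
        by (intro sum_mono) (simp add: mult.assoc mult_left_mono norm_mult_ineq[of _ "a ^ _", simplified pa])
      finally show "norm a ^ (2 * n) \<le> (\<Sum>k\<le>n. real (n choose k) * norm (Cab_one c b k) * norm a ^ k)" .
    qed simp
    have nb1: "norm b \<le> 1"
    proof (rule rho_bound[OF _ rho0 norm_ge_zero])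
      fix n
      have "norm b ^ (2 * n) = norm (d ^ n * b ^ n)"
        using cstar_identity[of "b ^ n"] pb by (simp add: d_def cstar_power power_mult power_mult_distrib mult.commute)
      also have "\<dots> \<le> (\<Sum>k\<le>n. real (n choose k) * norm ((-1) ^ k *\<^sub>R (d ^ k * Cab_one c b k)))"
        unfolding expansionB[OF dc] by (rule norm_binom_sum)
      also have "\<dots> \<le> (\<Sum>k\<le>n. real (n choose k) * norm (Cab_one c b k) * norm b ^ k)"
      proof (intro sum_mono)
        fix k
        have "norm ((-1::real) ^ k *\<^sub>R (d ^ k * Cab_one c b k)) = norm (d ^ k * Cab_one c b k)" by simp
        also have "\<dots> \<le> norm (d ^ k) * norm (Cab_one c b k)" by (rule norm_mult_ineq)
        also have "\<dots> \<le> norm b ^ k * norm (Cab_one c b k)"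
          by (intro mult_right_mono) (auto simp: nd[symmetric] norm_power_ineq)
        finally have X: "norm ((-1::real) ^ k *\<^sub>R (d ^ k * Cab_one c b k)) \<le> norm b ^ k * norm (Cab_one c b k)" .
        show "real (n choose k) * norm ((-1) ^ k *\<^sub>R (d ^ k * Cab_one c b k)) \<le> real (n choose k) * norm (Cab_one c b k) * norm b ^ k"
          using mult_left_mono[OF X, of "real (n choose k)"] by (simp add: mult_ac)
      qed
      finally show "norm b ^ (2 * n) \<le> (\<Sum>k\<le>n. real (n choose k) * norm (Cab_one c b k) * norm b ^ k)" .
    qed simp
    define p where "p = c * a"
    define q where "q = b * d"
    have pq: "p * q = 1" unfolding p_def q_def by (metis ab cd mult.assoc mult.left_neutral)
    have qp: "q * p = 1" unfolding p_def q_def by (metis ba dc mult.assoc mult.left_neutral)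
    have sp: "cstar p = p" by (simp add: p_def c_def cstar_mult cstar_cstar)
    have np: "norm p \<le> 1"
      using norm_mult_ineq[of c a] na1 nc by (simp add: p_def) (smt (verit) mult_le_one norm_ge_zero)
    have nq: "norm q \<le> 1"
      using norm_mult_ineq[of b d] nb1 nd by (simp add: q_def) (smt (verit) mult_le_one norm_ge_zero)
    have specp: "z * z = 1" if z: "z \<in> alg_spectrum p" for z
    proof -
      have im: "Im z = 0" by (rule spec_selfadj_real[OF sp z])
      have a1: "cmod z \<le> 1" using spec_bound[OF z] np by simp
      from spec_inverse[OF pq qp z] have z0: "z \<noteq> 0" and iz: "inverse z \<in> alg_spectrum q" by auto
      have "cmod (inverse z) \<le> 1" using spec_bound[OF iz] nq by (rule order_trans)
      then have "inverse (cmod z) \<le> 1" by (simp only: norm_inverse)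
      then have "1 \<le> cmod z" using z0 inverse_le_1_iff[of "cmod z"] by auto
      then have "cmod z = 1" using a1 by simp
      then have "\<bar>Re z\<bar> = 1" using im by (simp add: cmod_def)
      then have "Re z * Re z = 1" by (metis abs_mult_self_eq mult_1_left)
      then show ?thesis using im by (simp add: complex_eq_iff)
    qed
    have pp: "p * p = 1"
    proof -
      let ?h = "p * p - 1"
      have sh: "cstar ?h = ?h" by (simp add: cstar_diff cstar_mult sp)
      have "norm ?h \<le> 0"
      proof (rule selfadj_norm_le[OF sh order_refl])
        fix w :: complex assume w: "0 < cmod w"
        show "alg_invertible (emb w - ?h)"
        proof (rule ccontr)
          assume ni: "\<not> alg_invertible (emb w - ?h)"
          have eqh: "emb w - ?h = - (p * p - emb (w + 1))" by (simp add: emb_add)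
          have "\<not> alg_invertible (p * p - emb (w + 1))"
            using ni unfolding eqh invertible_uminus .
          then have "w + 1 \<in> alg_spectrum (p * p)" by (simp add: spec_iff)
          then obtain v where v: "v \<in> alg_spectrum p" "w + 1 = v * v" using spec_square by blast
          then have "w = 0" using specp[OF v(1)] by simp
          then show False using w by simp
        qed
      qed
      then show ?thesis by simp
    qed
    define e where "e = (1/2::real) *\<^sub>R (1 - p)"
    have omp: "(1 - p) * (1 - p) = (1 - p) + (1 - p)" by (simp add: algebra_simps pp)
    have ee: "e * e = e"
    proof -
      have "e * e = (1/4::real) *\<^sub>R ((1 - p) + (1 - p))" by (simp add: e_def omp[symmetric])
      also have "\<dots> = e" by (simp add: e_def scaleR_2[symmetric])
      finally show ?thesis .
    qed
    have se: "cstar e = e" by (simp add: e_def cstar_scaleR cstar_diff sp)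
    have pe: "p * e = - e" by (simp add: e_def algebra_simps pp)
    define y where "y = a * e"
    have "cstar y * y = e * (p * e)" by (simp add: y_def p_def c_def cstar_mult se mult.assoc)
    then have yy: "cstar y * y = - e" by (simp add: pe ee)
    have "e = 0" by (rule kv_lemma[OF ee se yy])
    then have "p = 1" by (simp add: e_def)
    then have ca: "c * a = 1" by (simp add: p_def)
    have "c = b" using inv_unique[OF ab ca] .
    then show "alg_unitary a" unfolding alg_unitary_def using ca ab by (simp add: c_def)
  qed
qed

end
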